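(* In an $a^2bc$-tiling, every vertex of degree $3$ is one of $\alpha^3$, $\alpha\beta^2$, $\alpha\gamma^2$, $\beta\gamma\delta$.
   Context: An $a^2bc$-quadrilateral is a simple spherical quadrilateral with edges $a,a,b,c$ in cyclic order, $a,b,c$ pairwise distinct; $\alpha$ = angle between the two $a$-edges; $\beta$ = angle between an $a$-edge and the $b$-edge; $\delta$ = angle between the $b$-edge and the $c$-edge; $\gamma$ = angle between the $c$-edge and an $a$-edge. An $a^2bc$-tiling is an edge-to-edge tiling of the sphere by congruent copies of such a quadrilateral with all vertices of degree $\ge3$. A vertex $\alpha^k\beta^l\gamma^m\delta^n$ has exactly $k$ copies of $\alpha$, etc. *)

theory Defs
  imports "HOL-Analysis.Analysis"
begin

type_synonym pt = "real^3"

definition sdist :: "pt \<Rightarrow> pt \<Rightarrow> real" where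
  "sdist p q = arccos (p \<bullet> q)"

text \<open>Minor great-circle arc from p to q (p, q unit, distinct, not antipodal).\<close>
definition sarc :: "pt \<Rightarrow> pt \<Rightarrow> pt set" where
  "sarc p q = (\<lambda>t. sgn ((1 - t) *\<^sub>R p + t *\<^sub>R q)) ` {0..1}"

definition nxt :: "nat \<Rightarrow> nat" where
  "nxt k = Suc k mod 4"

definition qedge :: "(nat \<Rightarrow> pt) \<Rightarrow> nat \<Rightarrow> pt set" where
  "qedge V k = sarc (V k) (V (nxt k))"

definition qboundary :: "(nat \<Rightarrow> pt) \<Rightarrow> pt set" where
  "qboundary V = (\<Union>k<4. qedge V k)"

text \<open>A simple spherical quadrilateral with corners V 0, V 1, V 2, V 3 (in cyclic order)
  whose open region is C, a connected component of the sphere minus the boundary curve.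
  The tile is closure C.\<close>
definition simple_squad :: "(nat \<Rightarrow> pt) \<Rightarrow> pt set \<Rightarrow> bool" where
  "simple_squad V C \<longleftrightarrow>
     (\<forall>k<4. V k \<in> sphere 0 1) \<and>
     (\<forall>k<4. \<forall>l<4. k \<noteq> l \<longrightarrow> V k \<noteq> V l) \<and>
     (\<forall>k<4. V (nxt k) \<noteq> - V k) \<and>
     (\<forall>k<4. qedge V k \<inter> qedge V (nxt k) = {V (nxt k)}) \<and>
     qedge V 0 \<inter> qedge V 2 = {} \<and> qedge V 1 \<inter> qedge V 3 = {} \<and>
     C \<in> components (sphere 0 1 - qboundary V)"

text \<open>Corner V 0 = alpha (between
  the two a-edges), V 1 = beta (a-edge and b-edge), V 2 = delta (b-edge and c-edge),
  V 3 = gamma (c-edge and a-edge).\<close>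
definition a2bc_quad :: "(nat \<Rightarrow> pt) \<Rightarrow> pt set \<Rightarrow> bool" where
  "a2bc_quad V C \<longleftrightarrow> simple_squad V C \<and>
     (\<exists>a b c. sdist (V 3) (V 0) = a \<and> sdist (V 0) (V 1) = a \<and>
              sdist (V 1) (V 2) = b \<and> sdist (V 2) (V 3) = c \<and>
              a \<noteq> b \<and> b \<noteq> c \<and> a \<noteq> c)"

text \<open>Tiles are the congruent copies g i ` closure C, i \<in> I, where each g i is an orthogonal
  transformation of R^3 (isometry of the sphere, reflections allowed).\<close>
definition tile :: "pt set \<Rightarrow> ('i \<Rightarrow> pt \<Rightarrow> pt) \<Rightarrow> 'i \<Rightarrow> pt set" where
  "tile C g i = g i ` closure C"

definition tvert :: "(nat \<Rightarrow> pt) \<Rightarrow> ('i \<Rightarrow> pt \<Rightarrow> pt) \<Rightarrow> 'i \<Rightarrow> nat \<Rightarrow> pt" where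
  "tvert V g i k = g i (V k)"

definition tedge :: "(nat \<Rightarrow> pt) \<Rightarrow> ('i \<Rightarrow> pt \<Rightarrow> pt) \<Rightarrow> 'i \<Rightarrow> nat \<Rightarrow> pt set" where
  "tedge V g i k = sarc (tvert V g i k) (tvert V g i (nxt k))"

definition tiling_vertices :: "(nat \<Rightarrow> pt) \<Rightarrow> ('i \<Rightarrow> pt \<Rightarrow> pt) \<Rightarrow> 'i set \<Rightarrow> pt set" where
  "tiling_vertices V g I = {tvert V g i k | i k. i \<in> I \<and> k < 4}"

text \<open>Edges of the tiling incident to v (as point sets; an edge shared by two tiles counts once).\<close>
definition edges_at :: "(nat \<Rightarrow> pt) \<Rightarrow> ('i \<Rightarrow> pt \<Rightarrow> pt) \<Rightarrow> 'i set \<Rightarrow> pt \<Rightarrow> pt set set" where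
  "edges_at V g I v = {tedge V g i k | i k. i \<in> I \<and> k < 4 \<and>
                          (v = tvert V g i k \<or> v = tvert V g i (nxt k))}"

definition degree :: "(nat \<Rightarrow> pt) \<Rightarrow> ('i \<Rightarrow> pt \<Rightarrow> pt) \<Rightarrow> 'i set \<Rightarrow> pt \<Rightarrow> nat" where
  "degree V g I v = card (edges_at V g I v)"

text \<open>Number of corners of type k (0 = alpha, 1 = beta, 2 = delta, 3 = gamma) at v.\<close>
definition ncorner :: "(nat \<Rightarrow> pt) \<Rightarrow> ('i \<Rightarrow> pt \<Rightarrow> pt) \<Rightarrow> 'i set \<Rightarrow> nat \<Rightarrow> pt \<Rightarrow> nat" where
  "ncorner V g I k v = card {i \<in> I. tvert V g i k = v}"

definition a2bc_tiling :: "(nat \<Rightarrow> pt) \<Rightarrow> pt set \<Rightarrow> ('i \<Rightarrow> pt \<Rightarrow> pt) \<Rightarrow> 'i set \<Rightarrow> bool" where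
  "a2bc_tiling V C g I \<longleftrightarrow>
     a2bc_quad V C \<and> finite I \<and>
     (\<forall>i\<in>I. orthogonal_transformation (g i)) \<and>
     (\<Union>i\<in>I. tile C g i) = sphere 0 1 \<and>
     (\<forall>i\<in>I. \<forall>j\<in>I. i \<noteq> j \<longrightarrow> g i ` C \<inter> g j ` C = {}) \<and>
     (\<forall>i\<in>I. \<forall>j\<in>I. i \<noteq> j \<longrightarrow>
        tile C g i \<inter> tile C g j = {} \<or>
        (\<exists>k<4. \<exists>l<4. tile C g i \<inter> tile C g j = {tvert V g i k} \<and> tvert V g i k = tvert V g j l) \<or>
        (\<exists>k<4. \<exists>l<4. tile C g i \<inter> tile C g j = tedge V g i k \<and> tedge V g i k = tedge V g j l)) \<and>
     (\<forall>v\<in>tiling_vertices V g I. degree V g I v \<ge> 3)"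

end

theory Submission
  imports Defs
begin

lemma stereo:
  fixes b :: "real^3"
  assumes "b \<in> sphere 0 1"
  obtains f h where "homeomorphism (sphere 0 1 - {b}) (UNIV::complex set) f h"
proof -
  have b0: "b \<noteq> 0" using assms by auto
  have "(sphere 0 1 - {b}) homeomorphic {x::real^3. b \<bullet> x = 0}"
    using homeomorphic_punctured_sphere_hyperplane[of 1 b 0 b 0] assms b0 by auto
  also have "{x::real^3. b \<bullet> x = 0} homeomorphic (UNIV::complex set)"
    by (rule homeomorphic_subspaces) (auto simp: subspace_hyperplane dim_hyperplane b0)
  finally show ?thesis using that homeomorphic_def by blast
qed

lemma openin_comp_sphere:
  fixes G :: "(real^3) set"
  assumes "closed G" "C \<in> components (sphere 0 1 - G)"
  shows "openin (top_of_set (sphere 0 1)) C"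
proof -
  have o: "openin (top_of_set (sphere 0 1)) (sphere 0 1 - G)"
    using assms(1) by (auto simp: openin_open intro!: exI[of _ "-G"])
  have "locally connected (sphere 0 1 - G)"
    using locally_open_subset[OF locally_connected_sphere o] by blast
  then have "openin (top_of_set (sphere 0 1 - G)) C"
    using openin_components_locally_connected assms(2) by blast
  then show ?thesis using o openin_trans by blast
qed

lemma sphere_not_sing:
  fixes b :: "real^3"
  assumes "b \<in> sphere 0 1" "openin (top_of_set (sphere 0 1)) C" "b \<in> C"
  shows "C - {b} \<noteq> {}"
proof
  assume "C - {b} = {}"
  then have Cb: "C = {b}" using assms by auto
  have "closedin (top_of_set (sphere 0 1)) {b}" using assms(1) by (auto simp: closedin_closed intro!: exI[of _ "{b}"])
  moreover have "connected (sphere 0 (1::real) :: (real^3) set)" by (rule connected_sphere) simp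
  ultimately have "sphere 0 1 = {b}"
    using assms Cb connected_clopen by blast
  moreover have "-b \<in> sphere 0 1" using assms by auto
  moreover have "-b \<noteq> b"
  proof
    assume "-b = b" then have "(2::real) *\<^sub>R b = 0" by (metis scaleR_2 add.right_inverse diff_minus_eq_add) 
    then have "b = 0" by simp
    then show False using assms(1) by simp
  qed
  ultimately show False by auto
qed

lemma conn_delete:
  fixes b :: "real^3"
  assumes C: "openin (top_of_set (sphere 0 1)) C" "connected C"
    and b0: "b0 \<in> sphere 0 1" "b0 \<notin> C"
  shows "connected (C - {b})"
proof (cases "b \<in> C")
  case False then show ?thesis using C(2) by simp
next
  case True
  obtain f h where hom: "homeomorphism (sphere 0 1 - {b0}) (UNIV::complex set) f h"
    using stereo b0(1) by blast
  have Csub: "C \<subseteq> sphere 0 1 - {b0}" using C b0 openin_imp_subset by blast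
  have "openin (top_of_set (sphere 0 1 - {b0})) C"
    using C(1) Csub openin_subset_trans by blast
  then have "openin (top_of_set UNIV) (f ` C)" using homeomorphism_imp_open_map[OF hom] by blast
  then have "open (f ` C)" by simp
  moreover have "connected (f ` C)"
    using C(2) hom Csub by (meson connected_continuous_image continuous_on_subset homeomorphism_def)
  ultimately have "connected (f ` C - {f b})"
    by (intro connected_open_delete) auto
  then have "connected (h ` (f ` C - {f b}))"
    using hom by (meson connected_continuous_image continuous_on_subset homeomorphism_def top_greatest)
  moreover have "h ` (f ` C - {f b}) = C - {b}"
  proof -
    have "\<And>x. x \<in> C \<Longrightarrow> h (f x) = x" using hom Csub unfolding homeomorphism_def by blast
    moreover have "\<And>x. x \<in> C \<Longrightarrow> b \<in> C \<Longrightarrow> f x = f b \<Longrightarrow> x = b"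
      using hom Csub unfolding homeomorphism_def by (metis subsetD)
    ultimately show ?thesis
    proof (intro set_eqI iffI)
      fix y assume "y \<in> h ` (f ` C - {f b})"
      then obtain x where "x \<in> C" "f x \<noteq> f b" "y = h (f x)" by auto
      then show "y \<in> C - {b}" using \<open>\<And>x. x \<in> C \<Longrightarrow> h (f x) = x\<close> by auto
    next
      fix y assume "y \<in> C - {b}"
      then have "y = h (f y)" "f y \<noteq> f b" using \<open>\<And>x. x \<in> C \<Longrightarrow> h (f x) = x\<close> True by (metis DiffE singletonI)+
      then show "y \<in> h ` (f ` C - {f b})" using \<open>y \<in> C - {b}\<close> by blast
    qed
  qed
  ultimately show ?thesis by simp
qed


lemma TOP:
  fixes G :: "(real^3) set"
  assumes GS: "G \<subseteq> sphere 0 1" and Gh: "G homeomorphic sphere (0::complex) 1"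
    and C: "C \<in> components (sphere 0 1 - G)" and p: "p \<in> G"
  shows "p \<in> closure C \<and> p \<in> closure (sphere 0 1 - closure C)"
proof -
  define S :: "(real^3) set" where "S = sphere 0 1"
  have cG: "compact G" using Gh homeomorphic_compactness compact_sphere by blast
  then have clG: "closed G" by (simp add: compact_imp_closed)
  have Co: "openin (top_of_set S) C" using openin_comp_sphere[OF clG C] by (simp add: S_def)
  have Cc: "connected C" using C in_components_connected by blast
  have CsG: "C \<subseteq> S - G" using C in_components_subset S_def by blast
  obtain b where bC: "b \<in> C" using C in_components_nonempty by blast
  have bS: "b \<in> S" and bG: "b \<notin> G" using bC CsG by auto
  obtain f h where hom: "homeomorphism (S - {b}) (UNIV::complex set) f h"
    using stereo bS S_def by metis
  have hf: "\<And>x. x \<in> S - {b} \<Longrightarrow> h (f x) = x" and fh: "\<And>y. f (h y) = y"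
    and hS: "\<And>y. h y \<in> S - {b}"
    using hom unfolding homeomorphism_def by auto
  have contf: "continuous_on (S - {b}) f" and conth: "continuous_on UNIV h"
    using hom unfolding homeomorphism_def by auto
  define G' where "G' = f ` G"
  have GSb: "G \<subseteq> S - {b}" using GS bG S_def by auto
  have "homeomorphism G G' f h"
    using homeomorphism_of_subsets[OF hom GSb] G'_def by blast
  then have "G' homeomorphic G" using homeomorphic_def homeomorphic_sym by blast
  then have G'h: "G' homeomorphic sphere (0::complex) 1"
    using Gh homeomorphic_trans by blast
  have cG': "compact G'" using G'h homeomorphic_compactness compact_sphere by blast
  have oG': "open (- G')" using cG' by (simp add: compact_imp_closed open_Compl)
  obtain b0 where b0: "b0 \<in> G" using p by blast
  have Cb: "connected (C - {b})"
    using conn_delete[OF Co[unfolded S_def] Cc, of b0 b] b0 GS CsG by (auto simp: S_def subset_iff)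
  have Cbne: "C - {b} \<noteq> {}" using sphere_not_sing[of b C] bS Co bC S_def by auto
  define U0 where "U0 = f ` (C - {b})"
  have U0sub: "U0 \<subseteq> - G'"
  proof
    fix y assume "y \<in> U0"
    then obtain x where x: "x \<in> C - {b}" "y = f x" using U0_def by auto
    show "y \<in> - G'"
    proof
      assume "y \<in> G'"
      then obtain z where z: "z \<in> G" "y = f z" using G'_def by auto
      have "x = h (f x)" "z = h (f z)" using hf x(1) z(1) CsG GSb by (auto simp: subset_iff)
      then have "x = z" using x z by simp
      then show False using x z CsG by auto
    qed
  qed
  have U0c: "connected U0"
    unfolding U0_def using Cb contf CsG
    by (meson Diff_mono connected_continuous_image continuous_on_subset order_refl subset_trans Diff_subset)
  have U0max: "T \<subseteq> U0" if Tc: "connected T" and TG: "T \<subseteq> - G'" and TU: "T \<inter> U0 \<noteq> {}" for T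
  proof -
    have "connected (h ` T)" using Tc conth by (meson connected_continuous_image continuous_on_subset top_greatest)
    moreover have "h ` T \<subseteq> S - G"
    proof
      fix x assume "x \<in> h ` T"
      then obtain y where y: "y \<in> T" "x = h y" by auto
      have "x \<notin> G"
      proof
        assume "x \<in> G"
        then have "f x \<in> G'" using G'_def by auto
        then show False using y fh TG by auto
      qed
      then show "x \<in> S - G" using hS y by auto
    qed
    moreover have "C \<inter> h ` T \<noteq> {}"
    proof -
      obtain y where "y \<in> T" "y \<in> U0" using TU by auto
      then obtain x where "x \<in> C - {b}" "y = f x" using U0_def by auto
      then have "h y \<in> C" using hf CsG by auto
      then show ?thesis using \<open>y \<in> T\<close> by auto
    qed
    ultimately have "h ` T \<subseteq> C" using components_maximal[OF C[folded S_def]] by blast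
    then show "T \<subseteq> U0"
    proof -
      have "\<And>y. y \<in> T \<Longrightarrow> y \<in> U0"
      proof -
        fix y assume "y \<in> T"
        then have "h y \<in> C" "h y \<noteq> b" using \<open>h ` T \<subseteq> C\<close> hS by auto
        then show "y \<in> U0" unfolding U0_def using fh by (metis DiffI image_eqI singletonD)
      qed
      then show ?thesis by blast
    qed
  qed
  obtain z0 where z0: "z0 \<in> U0" using Cbne U0_def by auto
  have U0comp: "U0 = connected_component_set (- G') z0"
  proof
    show "U0 \<subseteq> connected_component_set (- G') z0"
      using connected_component_maximal[OF z0 U0c U0sub] .
    show "connected_component_set (- G') z0 \<subseteq> U0"
      using U0max connected_connected_component connected_component_subset
      by (metis connected_component_refl_eq disjoint_iff mem_Collect_eq z0 U0sub subsetD)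
  qed
  have U0C: "U0 \<in> components (- G')"
    using U0comp z0 U0sub components_iff by blast
  have frU0: "frontier U0 = G'"
    using Jordan_Brouwer_frontier[OF G'h U0C] by simp
  have fp: "f p \<in> G'" "h (f p) = p" using p G'_def hf GSb by auto
  have "h ` closure U0 \<subseteq> closure (h ` U0)"
    by (rule image_closure_subset) (auto intro: continuous_on_subset[OF conth] closure_subset[THEN subsetD])
  moreover have "h ` U0 = C - {b}" unfolding U0_def using hf CsG by (force simp: image_iff)
  moreover have "f p \<in> closure U0" using fp frU0 frontier_def by auto
  ultimately have "p \<in> closure (C - {b})" using fp by (metis image_eqI subsetD)
  then have c1: "p \<in> closure C" by (meson Diff_subset closure_mono subsetD)
  have "\<not> connected (- G')" using Jordan_Brouwer_separation[OF G'h] by simp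
  then obtain z1 where z1: "z1 \<in> - G'" "z1 \<notin> U0" using U0c U0sub by (metis subsetI subset_antisym)
  define U1 where "U1 = connected_component_set (- G') z1"
  have U1C: "U1 \<in> components (- G')" using z1 components_iff U1_def by blast
  have frU1: "frontier U1 = G'" using Jordan_Brouwer_frontier[OF G'h U1C] by simp
  have U1U0: "U1 \<inter> U0 = {}"
  proof (rule ccontr)
    assume "U1 \<inter> U0 \<noteq> {}"
    then obtain w where w: "w \<in> U1" "w \<in> U0" by auto
    have "U1 = connected_component_set (- G') w" using w(1) U1_def connected_component_eq by metis
    also have "\<dots> = U0" using w(2) U0comp connected_component_eq by metis
    finally show False using z1 U1_def
      by (metis ComplD ComplI connected_component_refl_eq mem_Collect_eq)
  qed
  have U1o: "open U1" using oG' U1_def open_connected_component by blast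
  define W where "W = h ` U1"
  have "openin (top_of_set UNIV) U1" using U1o by simp
  then have "openin (top_of_set (S - {b})) W"
    unfolding W_def by (rule homeomorphism_imp_open_map[OF homeomorphism_symD[OF hom]])
  moreover have "openin (top_of_set S) (S - {b})"
    by (rule openin_delete[OF openin_subtopology_self])
  ultimately have Wo: "openin (top_of_set S) W" by (rule openin_trans)
  have WC: "W \<inter> C = {}"
  proof (rule ccontr)
    assume "W \<inter> C \<noteq> {}"
    then obtain u where u: "u \<in> U1" "h u \<in> C" using W_def by auto
    then have "u \<in> U0" using hS fh U0_def by (metis DiffI image_eqI DiffD2)
    then show False using u U1U0 by auto
  qed
  obtain Op where O: "open Op" "W = S \<inter> Op" using Wo openin_open by blast
  have "Op \<inter> C = {}" using WC O CsG by auto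
  then have "Op \<inter> closure C = {}" using O(1) open_Int_closure_eq_empty by blast
  then have WS: "W \<subseteq> S - closure C" using O by auto
  have "h ` closure U1 \<subseteq> closure (h ` U1)"
    by (rule image_closure_subset) (auto intro: continuous_on_subset[OF conth] closure_subset[THEN subsetD])
  moreover have "f p \<in> closure U1" using fp frU1 frontier_def by auto
  ultimately have "p \<in> closure W" using fp W_def by (metis image_eqI subsetD)
  then have "p \<in> closure (S - closure C)" using WS closure_mono by blast
  then show ?thesis using c1 S_def by simp
qed


definition lin :: "real^3 \<Rightarrow> real^3 \<Rightarrow> real \<Rightarrow> real^3" where
  "lin p q t = (1 - t) *\<^sub>R p + t *\<^sub>R q"

definition good :: "real^3 \<Rightarrow> real^3 \<Rightarrow> bool" where
  "good p q \<longleftrightarrow> norm p = 1 \<and> norm q = 1 \<and> p \<noteq> q \<and> p \<noteq> - q"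

lemma unit_indep:
  fixes p q :: "real^3"
  assumes g: "good p q" and e: "a *\<^sub>R p + b *\<^sub>R q = 0"
  shows "a = 0 \<and> b = 0"
proof (cases "a = 0")
  case True then have "b *\<^sub>R q = 0" using e by simp
  then show ?thesis using True g by (auto simp: good_def)
next
  case False
  have "a *\<^sub>R p = - (b *\<^sub>R q)" using e by (simp add: eq_neg_iff_add_eq_0)
  then have "p = (- b / a) *\<^sub>R q" using False
    by (metis (no_types, lifting) divide_inverse_commute eq_vector_fraction_iff scaleR_minus_left)
  then have "\<bar>- b / a\<bar> = 1" using g by (auto simp: good_def)
  then have "- b / a = 1 \<or> - b / a = -1" by linarith
  then show ?thesis using \<open>p = (- b / a) *\<^sub>R q\<close> g by (auto simp: good_def)
qed

lemma good_dot:
  fixes p q :: "real^3"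
  assumes "good p q"
  shows "p \<bullet> q < 1" "p \<bullet> q > -1"
proof -
  have n: "p \<bullet> p = 1" "q \<bullet> q = 1" using assms unfolding good_def by (simp_all add: norm_eq_1)
  have a: "(norm (p - q))^2 = 2 - 2 * (p \<bullet> q)"
    by (simp add: power2_norm_eq_inner inner_diff_left inner_diff_right n inner_commute[of q p])
  have b: "(norm (p + q))^2 = 2 + 2 * (p \<bullet> q)"
    by (simp add: power2_norm_eq_inner inner_add_left inner_add_right n inner_commute[of q p])
  have "p - q \<noteq> 0" using assms by (simp add: good_def)
  then have "(norm (p - q))^2 > 0" by simp
  then show "p \<bullet> q < 1" using a by linarith
  have "p + q \<noteq> 0"
  proof
    assume "p + q = 0" then have "p = - q" by (simp add: eq_neg_iff_add_eq_0)
    then show False using assms by (simp add: good_def)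
  qed
  then have "(norm (p + q))^2 > 0" by simp
  then show "p \<bullet> q > -1" using b by linarith
qed

lemma lin_nz:
  assumes "good p q" "t \<in> {0..1}"
  shows "lin p q t \<noteq> 0"
  using unit_indep[OF assms(1), of "1 - t" t] by (auto simp: lin_def)

lemma lin_indep:
  assumes "good p q" "lin p q s = c *\<^sub>R lin p q t"
  shows "s = t"
proof -
  have "(1 - s - c * (1 - t)) *\<^sub>R p + (s - c * t) *\<^sub>R q = 0"
    using assms(2) by (simp add: lin_def algebra_simps)
  then have "1 - s - c * (1 - t) = 0" "s - c * t = 0" using unit_indep[OF assms(1)] by blast+
  then have "s = c * t" by simp
  then have "1 - c = 0" using \<open>1 - s - c * (1 - t) = 0\<close> by (simp add: algebra_simps)
  then show ?thesis using \<open>s = c * t\<close> by simp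
qed

definition gam :: "real^3 \<Rightarrow> real^3 \<Rightarrow> real \<Rightarrow> real^3" where
  "gam p q t = sgn (lin p q t)"

lemma gam_arc:
  assumes "good p q"
  shows "arc (gam p q)" "path_image (gam p q) = sarc p q"
    "pathstart (gam p q) = p" "pathfinish (gam p q) = q"
proof -
  have "continuous_on {0..1} (lin p q)" unfolding lin_def by (intro continuous_intros)
  then have "continuous_on {0..1} (gam p q)"
    unfolding gam_def using lin_nz[OF assms] by (intro continuous_on_sgn) auto
  moreover have "inj_on (gam p q) {0..1}"
  proof (rule inj_onI)
    fix s t assume st: "s \<in> {0..1}" "t \<in> {0..1}" "gam p q s = gam p q t"
    have ns: "norm (lin p q s) \<noteq> 0" "norm (lin p q t) \<noteq> 0" using lin_nz[OF assms] st by auto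
    have "lin p q s = (norm (lin p q s) / norm (lin p q t)) *\<^sub>R lin p q t"
    proof -
      have "lin p q s = norm (lin p q s) *\<^sub>R gam p q s" using ns by (simp add: gam_def sgn_div_norm)
      also have "\<dots> = norm (lin p q s) *\<^sub>R gam p q t" using st by simp
      also have "\<dots> = (norm (lin p q s) / norm (lin p q t)) *\<^sub>R lin p q t"
        using ns by (simp add: gam_def sgn_div_norm divide_inverse_commute)
      finally show ?thesis .
    qed
    then show "s = t" using lin_indep[OF assms] by blast
  qed
  ultimately show "arc (gam p q)" by (simp add: arc_def path_def)
  show "path_image (gam p q) = sarc p q" by (simp add: path_image_def sarc_def gam_def lin_def)
  show "pathstart (gam p q) = p" "pathfinish (gam p q) = q" using assms
    by (auto simp: pathstart_def pathfinish_def gam_def lin_def good_def sgn_div_norm)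
qed

lemma sarc_ends: "good p q \<Longrightarrow> p \<in> sarc p q \<and> q \<in> sarc p q"
  using gam_arc[of p q] by (metis pathfinish_in_path_image pathstart_in_path_image)

lemma sarc_cone:
  assumes "x \<in> sarc p q"
  shows "\<exists>a b. a \<ge> 0 \<and> b \<ge> 0 \<and> x = a *\<^sub>R p + b *\<^sub>R q"
proof -
  obtain t where t: "t \<in> {0..1}" "x = sgn ((1 - t) *\<^sub>R p + t *\<^sub>R q)" using assms sarc_def by auto
  define n where "n = norm ((1 - t) *\<^sub>R p + t *\<^sub>R q)"
  have "x = ((1 - t) / n) *\<^sub>R p + (t / n) *\<^sub>R q"
    using t by (simp add: sgn_div_norm n_def scaleR_add_right divide_inverse_commute)
  then show ?thesis using t n_def by (intro exI[of _ "(1 - t) / n"] exI[of _ "t / n"]) auto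
qed


lemma nn_sum0:
  fixes x y u w :: real
  assumes "x \<ge> 0" "y \<ge> 0" "u \<ge> 0" "w \<ge> 0" "x * y + u * w = 0"
  shows "(x = 0 \<or> y = 0) \<and> (u = 0 \<or> w = 0)"
proof -
  have "x * y \<ge> 0" "u * w \<ge> 0" using assms by simp_all
  then have "x * y = 0" "u * w = 0" using assms(5) by linarith+
  then show ?thesis by simp
qed

lemma sarc_eq_ends:
  assumes g1: "good p q" and g2: "good p' q'" and e: "sarc p q = sarc p' q'"
  shows "(p' = p \<and> q' = q) \<or> (p' = q \<and> q' = p)"
proof -
  have "p \<in> sarc p' q'" "q \<in> sarc p' q'" using sarc_ends[OF g1] e by auto
  then obtain a1 b1 a2 b2 where A: "a1 \<ge> 0" "b1 \<ge> 0" "p = a1 *\<^sub>R p' + b1 *\<^sub>R q'"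
    "a2 \<ge> 0" "b2 \<ge> 0" "q = a2 *\<^sub>R p' + b2 *\<^sub>R q'"
    using sarc_cone by metis
  have "p' \<in> sarc p q" "q' \<in> sarc p q" using sarc_ends[OF g2] e by auto
  then obtain c1 d1 c2 d2 where B: "c1 \<ge> 0" "d1 \<ge> 0" "p' = c1 *\<^sub>R p + d1 *\<^sub>R q"
    "c2 \<ge> 0" "d2 \<ge> 0" "q' = c2 *\<^sub>R p + d2 *\<^sub>R q"
    using sarc_cone by metis
  have "(a1 * c1 + b1 * c2 - 1) *\<^sub>R p + (a1 * d1 + b1 * d2) *\<^sub>R q = 0"
  proof -
    have "p = a1 *\<^sub>R (c1 *\<^sub>R p + d1 *\<^sub>R q) + b1 *\<^sub>R (c2 *\<^sub>R p + d2 *\<^sub>R q)"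
      using A(3) B(3) B(6) by simp
    then show ?thesis by (simp add: algebra_simps)
  qed
  from unit_indep[OF g1 this] have E12: "a1 * c1 + b1 * c2 = 1" "a1 * d1 + b1 * d2 = 0"
    by auto
  have "(a2 * c1 + b2 * c2) *\<^sub>R p + (a2 * d1 + b2 * d2 - 1) *\<^sub>R q = 0"
  proof -
    have "q = a2 *\<^sub>R (c1 *\<^sub>R p + d1 *\<^sub>R q) + b2 *\<^sub>R (c2 *\<^sub>R p + d2 *\<^sub>R q)"
      using A(6) B(3) B(6) by simp
    then show ?thesis by (simp add: algebra_simps)
  qed
  from unit_indep[OF g1 this] have E34: "a2 * c1 + b2 * c2 = 0" "a2 * d1 + b2 * d2 = 1"
    by auto
  have Z2: "(a1 = 0 \<or> d1 = 0) \<and> (b1 = 0 \<or> d2 = 0)" using nn_sum0 A B E12(2) by blast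
  have Z3: "(a2 = 0 \<or> c1 = 0) \<and> (b2 = 0 \<or> c2 = 0)" using nn_sum0 A B E34(1) by blast
  have n: "norm p = 1" "norm q = 1" "norm p' = 1" "norm q' = 1" using g1 g2 by (auto simp: good_def)
  show ?thesis
  proof (cases "a1 = 0")
    case True
    then have "b1 * c2 = 1" using E12 by simp
    then have "b1 \<noteq> 0" "c2 \<noteq> 0" by auto
    then have "d2 = 0" "b2 = 0" using Z2 Z3 by auto
    then have "a2 * d1 = 1" using E34 by simp
    then have "a2 \<noteq> 0" by auto
    have p: "p = b1 *\<^sub>R q'" using A(3) True by simp
    have q: "q = a2 *\<^sub>R p'" using A(6) \<open>b2 = 0\<close> by simp
    have "b1 = 1" using p n A(2) by simp
    moreover have "a2 = 1" using q n A(4) by simp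
    ultimately show ?thesis using p q by simp
  next
    case False
    then have "d1 = 0" using Z2 by auto
    then have "b2 * d2 = 1" using E34 by simp
    then have "b2 \<noteq> 0" "d2 \<noteq> 0" by auto
    then have "b1 = 0" "c2 = 0" using Z2 Z3 by auto
    then have "a1 * c1 = 1" using E12 by simp
    then have "c1 \<noteq> 0" by auto
    then have "a2 = 0" using Z3 by auto
    have p: "p = a1 *\<^sub>R p'" using A(3) \<open>b1 = 0\<close> by simp
    have q: "q = b2 *\<^sub>R q'" using A(6) \<open>a2 = 0\<close> by simp
    have "a1 = 1" using p n A(1) by simp
    moreover have "b2 = 1" using q n A(5) by simp
    ultimately show ?thesis using p q by simp
  qed
qed

lemma orth_sgn:
  assumes "orthogonal_transformation g"
  shows "g (sgn u) = sgn (g u)"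
  using assms by (simp add: sgn_div_norm orthogonal_transformation_scaleR orthogonal_transformation_norm)

lemma orth_lin:
  assumes "orthogonal_transformation g"
  shows "g (lin p q t) = lin (g p) (g q) t"
  using assms unfolding lin_def
  by (simp add: orthogonal_transformation_scaleR linear_add orthogonal_transformation_linear)

lemma sarc_image:
  assumes "orthogonal_transformation g"
  shows "sarc (g p) (g q) = g ` sarc p q"
proof -
  have "sarc p q = (\<lambda>t. sgn (lin p q t)) ` {0..1}" by (simp add: sarc_def lin_def)
  moreover have "sarc (g p) (g q) = (\<lambda>t. sgn (lin (g p) (g q) t)) ` {0..1}" by (simp add: sarc_def lin_def)
  ultimately show ?thesis using orth_sgn[OF assms] orth_lin[OF assms] by (simp add: image_image)
qed

lemma sdist_orth:
  assumes "orthogonal_transformation g"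
  shows "sdist (g p) (g q) = sdist p q"
  using assms by (simp add: sdist_def orthogonal_transformation_def)

lemma good_orth:
  assumes "orthogonal_transformation g" "good p q"
  shows "good (g p) (g q)"
proof -
  have i: "inj g" using assms(1) orthogonal_transformation_inj by blast
  have "g (- q) = - g q" using assms(1) orthogonal_transformation_linear linear_neg by blast
  then show ?thesis using assms i unfolding good_def
    by (metis inj_eq orthogonal_transformation_norm)
qed


lemma nxt_simps[simp]: "nxt 0 = 1" "nxt 1 = 2" "nxt (Suc 0) = 2" "nxt 2 = 3" "nxt 3 = 0"
  by (simp_all add: nxt_def)

lemma lt4_cases: "(k::nat) < 4 \<Longrightarrow> k = 0 \<or> k = 1 \<or> k = 2 \<or> k = 3" by auto

lemma nxt_lt4: "k < 4 \<Longrightarrow> nxt k < 4" by (simp add: nxt_def)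

lemma sq_good:
  assumes "simple_squad V C" "k < 4"
  shows "good (V k) (V (nxt k))"
proof -
  have "nxt k < 4" "nxt k \<noteq> k" using lt4_cases[OF assms(2)] by (auto simp: nxt_def)
  then show ?thesis using assms unfolding simple_squad_def good_def by auto
qed

lemma sq_int:
  assumes sq: "simple_squad V C" and kl: "k < 4" "l < 4" "k \<noteq> l"
    and w: "w \<in> qedge V k" "w \<in> qedge V l"
  shows "w = V k \<or> w = V (nxt k)"
proof -
  have a: "\<And>j. j < 4 \<Longrightarrow> qedge V j \<inter> qedge V (nxt j) = {V (nxt j)}"
    and o: "qedge V 0 \<inter> qedge V 2 = {}" "qedge V 1 \<inter> qedge V 3 = {}"
    using sq unfolding simple_squad_def by auto
  have a0: "qedge V 0 \<inter> qedge V 1 = {V 1}" using a[of 0] by simp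
  have a1: "qedge V 1 \<inter> qedge V 2 = {V 2}" using a[of 1] by simp
  have a2: "qedge V 2 \<inter> qedge V 3 = {V 3}" using a[of 2] by simp
  have a3: "qedge V 3 \<inter> qedge V 0 = {V 0}" using a[of 3] by simp
  show ?thesis using lt4_cases[OF kl(1)] lt4_cases[OF kl(2)] kl(3)
    using w a0 a1 a2 a3 o by (elim disjE) (auto simp: set_eq_iff)
qed

lemma sq_vert_on_edge:
  assumes sq: "simple_squad V C" and "k < 4" "j < 4" "V j \<in> qedge V k"
  shows "j = k \<or> j = nxt k"
proof (rule ccontr)
  assume "\<not> (j = k \<or> j = nxt k)"
  then have jk: "j \<noteq> k" "j \<noteq> nxt k" by auto
  have "V j \<in> qedge V j" using sarc_ends[OF sq_good[OF sq \<open>j < 4\<close>]] by (simp add: qedge_def)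
  then have "V j = V k \<or> V j = V (nxt k)" using sq_int[OF sq \<open>k<4\<close> \<open>j<4\<close>] jk assms(4) by metis
  moreover have "nxt k < 4" using nxt_lt4 assms by blast
  ultimately show False using sq jk assms unfolding simple_squad_def by metis
qed

lemma lt4_set: "{..<4::nat} = {0,1,2,3}" by auto

lemma qboundary_4: "qboundary V = qedge V 0 \<union> qedge V 1 \<union> qedge V 2 \<union> qedge V 3"
  unfolding qboundary_def lt4_set by auto

lemma sarc_sphere:
  assumes "good p q"
  shows "sarc p q \<subseteq> sphere 0 1"
proof
  fix x assume "x \<in> sarc p q"
  then obtain t where "t \<in> {0..1}" "x = sgn (lin p q t)" by (auto simp: sarc_def lin_def)
  then show "x \<in> sphere 0 1" using lin_nz[OF assms] by (simp add: norm_sgn)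
qed

lemma qboundary_sphere:
  assumes sq: "simple_squad V C"
  shows "qboundary V \<subseteq> sphere 0 1"
  using sarc_sphere sq_good[OF sq] by (auto simp: qboundary_def qedge_def)

lemma qboundary_circle:
  assumes sq: "simple_squad V C"
  shows "qboundary V homeomorphic sphere (0::complex) 1"
proof -
  define c where "c k = gam (V k) (V (nxt k))" for k
  have arc: "arc (c k)" "path_image (c k) = qedge V k" "pathstart (c k) = V k"
    "pathfinish (c k) = V (nxt k)" if "k < 4" for k
    using gam_arc[OF sq_good[OF sq that]] by (auto simp: c_def qedge_def)
  have a: "\<And>j. j < 4 \<Longrightarrow> qedge V j \<inter> qedge V (nxt j) = {V (nxt j)}"
    and o: "qedge V 0 \<inter> qedge V 2 = {}" "qedge V 1 \<inter> qedge V 3 = {}"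
    using sq unfolding simple_squad_def by auto
  have a0: "qedge V 0 \<inter> qedge V 1 = {V 1}" using a[of 0] by simp
  have a1: "qedge V 1 \<inter> qedge V 2 = {V 2}" using a[of 1] by simp
  have a2: "qedge V 2 \<inter> qedge V 3 = {V 3}" using a[of 2] by simp
  have a3: "qedge V 3 \<inter> qedge V 0 = {V 0}" using a[of 3] by simp
  have j01: "arc (c 0 +++ c 1)" proof (rule arc_join) qed (use arc[of 0] arc[of 1] a0 in auto)
  have i01: "path_image (c 0 +++ c 1) = qedge V 0 \<union> qedge V 1"
    using arc[of 0] arc[of 1] by (simp add: path_image_join arc_imp_path)
  have j012: "arc ((c 0 +++ c 1) +++ c 2)"
    proof (rule arc_join) qed (use j01 arc[of 2] arc[of 1] a1 o i01 in auto)
  have i012: "path_image ((c 0 +++ c 1) +++ c 2) = qedge V 0 \<union> qedge V 1 \<union> qedge V 2"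
    using j01 arc[of 1] arc[of 2] i01 by (simp add: path_image_join arc_imp_path)
  have sp: "simple_path (((c 0 +++ c 1) +++ c 2) +++ c 3)"
    proof (rule simple_path_join_loop) qed (use j012 arc[of 3] arc[of 2] arc[of 0] i012 a2 a3 o in auto)
  have pi: "path_image (((c 0 +++ c 1) +++ c 2) +++ c 3) = qboundary V"
    using j012 arc[of 2] arc[of 3] i012
    by (simp add: path_image_join arc_imp_path qboundary_4 Un_ac)
  have lp: "pathfinish (((c 0 +++ c 1) +++ c 2) +++ c 3) = pathstart (((c 0 +++ c 1) +++ c 2) +++ c 3)"
    using arc[of 3] arc[of 0] by simp
  show ?thesis using homeomorphic_simple_path_image_circle[OF sp lp, of 1 0] pi by simp
qed

lemma sq_mid:
  assumes sq: "simple_squad V C" and k: "k < 4"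
  obtains m where "m \<in> qedge V k" "m \<noteq> V k" "m \<noteq> V (nxt k)"
proof -
  define c where "c = gam (V k) (V (nxt k))"
  have arc: "arc c" "path_image c = qedge V k" "pathstart c = V k" "pathfinish c = V (nxt k)"
    using gam_arc[OF sq_good[OF sq k]] by (auto simp: c_def qedge_def)
  have inj: "inj_on c {0..1}" using arc(1) arc_def by blast
  have "c (1/2) \<in> qedge V k" using arc(2) by (auto simp: path_image_def)
  moreover have "c (1/2) \<noteq> c 0" "c (1/2) \<noteq> c 1" using inj by (auto dest: inj_onD)
  ultimately show ?thesis using that arc(3,4) by (auto simp: pathstart_def pathfinish_def)
qed


locale til =
  fixes V :: "nat \<Rightarrow> real^3" and C :: "(real^3) set"
    and g :: "'i \<Rightarrow> real^3 \<Rightarrow> real^3" and I :: "'i set"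
  assumes T: "a2bc_tiling V C g I"
begin

lemma sq: "simple_squad V C" using T by (simp add: a2bc_tiling_def a2bc_quad_def)
lemma finI: "finite I" using T by (simp add: a2bc_tiling_def)
lemma orth: "x \<in> I \<Longrightarrow> orthogonal_transformation (g x)" using T by (simp add: a2bc_tiling_def)
lemma cover: "(\<Union>i\<in>I. tile C g i) = sphere 0 1" using T by (simp add: a2bc_tiling_def)
lemma disj: "x \<in> I \<Longrightarrow> y \<in> I \<Longrightarrow> x \<noteq> y \<Longrightarrow> g x ` C \<inter> g y ` C = {}"
  using T by (simp add: a2bc_tiling_def)
lemma e2e: "x \<in> I \<Longrightarrow> y \<in> I \<Longrightarrow> x \<noteq> y \<Longrightarrow>
        tile C g x \<inter> tile C g y = {} \<or>
        (\<exists>k<4. \<exists>l<4. tile C g x \<inter> tile C g y = {tvert V g x k} \<and> tvert V g x k = tvert V g y l) \<or>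
        (\<exists>k<4. \<exists>l<4. tile C g x \<inter> tile C g y = tedge V g x k \<and> tedge V g x k = tedge V g y l)"
  using T unfolding a2bc_tiling_def by blast
lemma Ccomp: "C \<in> components (sphere 0 1 - qboundary V)" using sq by (simp add: simple_squad_def)
lemma Vsph: "k < 4 \<Longrightarrow> norm (V k) = 1" using sq by (simp add: simple_squad_def)
lemma Vdist: "k < 4 \<Longrightarrow> l < 4 \<Longrightarrow> V k = V l \<Longrightarrow> k = l" using sq unfolding simple_squad_def by blast

lemma ginj: "x \<in> I \<Longrightarrow> g x u = g x w \<longleftrightarrow> u = w"
  using orth orthogonal_transformation_inj by (metis injD)

lemma gnorm: "x \<in> I \<Longrightarrow> norm (g x u) = norm u"
  using orth orthogonal_transformation_norm by blast

lemma tedge_img: "x \<in> I \<Longrightarrow> tedge V g x k = g x ` qedge V k"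
  by (simp add: tedge_def tvert_def qedge_def sarc_image orth)

lemma good_t: "x \<in> I \<Longrightarrow> k < 4 \<Longrightarrow> good (tvert V g x k) (tvert V g x (nxt k))"
  unfolding tvert_def using good_orth orth sq_good[OF sq] by blast

lemma tvert_inj: "x \<in> I \<Longrightarrow> k < 4 \<Longrightarrow> l < 4 \<Longrightarrow> tvert V g x k = tvert V g x l \<Longrightarrow> k = l"
  unfolding tvert_def using ginj Vdist by blast

lemma edge_ends:
  assumes "x \<in> I" "y \<in> I" "k < 4" "l < 4" "tedge V g x k = tedge V g y l"
  shows "(tvert V g y l = tvert V g x k \<and> tvert V g y (nxt l) = tvert V g x (nxt k)) \<or>
         (tvert V g y l = tvert V g x (nxt k) \<and> tvert V g y (nxt l) = tvert V g x k)"
  using sarc_eq_ends[OF good_t[OF assms(1,3)] good_t[OF assms(2,4)]] assms(5)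
  by (simp add: tedge_def)

definition cls :: "nat \<Rightarrow> nat" where "cls k = (if k = 1 then 1 else if k = 2 then 2 else 0)"

lemma cls_eq:
  assumes "x \<in> I" "y \<in> I" "k < 4" "l < 4" "tedge V g x k = tedge V g y l"
  shows "cls k = cls l"
proof -
  obtain a b c where abc: "sdist (V 3) (V 0) = a" "sdist (V 0) (V 1) = a"
    "sdist (V 1) (V 2) = b" "sdist (V 2) (V 3) = c" "a \<noteq> b" "b \<noteq> c" "a \<noteq> c"
    using T by (auto simp: a2bc_tiling_def a2bc_quad_def)
  define len :: "nat \<Rightarrow> real" where "len k = (if k = 1 then b else if k = 2 then c else a)" for k
  have sym: "sdist u w = sdist w u" for u w by (simp add: sdist_def inner_commute)
  have L: "sdist (V k) (V (nxt k)) = len k" if "k < 4" for k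
    using lt4_cases[OF that] abc sym by (auto simp: len_def)
  have "sdist (tvert V g x k) (tvert V g x (nxt k)) = sdist (tvert V g y l) (tvert V g y (nxt l))"
    using edge_ends[OF assms] sym by auto
  then have "len k = len l" using L assms sdist_orth orth nxt_lt4 by (simp add: tvert_def)
  then show ?thesis using lt4_cases[OF assms(3)] lt4_cases[OF assms(4)] abc
    by (auto simp: len_def cls_def)
qed

lemma gcont: "x \<in> I \<Longrightarrow> continuous_on S (g x)"
  using orth orthogonal_transformation_linear linear_conv_bounded_linear linear_continuous_on by metis

lemma Ccl_bounded: "bounded C"
  using Ccomp in_components_subset bounded_sphere bounded_subset by blast

lemma tile_compact: "x \<in> I \<Longrightarrow> compact (tile C g x)"
proof -
  assume x: "x \<in> I"
  have "compact (closure C)" using Ccl_bounded compact_closure by blast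
  moreover have "continuous_on (closure C) (g x)"
    by (rule gcont[OF x])
  ultimately show ?thesis unfolding tile_def by (rule compact_continuous_image[rotated])
qed

lemma gsph: "x \<in> I \<Longrightarrow> u \<in> sphere 0 1 \<longleftrightarrow> g x u \<in> sphere 0 1"
  using gnorm by simp

lemma gsurj: "x \<in> I \<Longrightarrow> \<exists>u. z = g x u"
  using orth orthogonal_transformation_surj by (metis surjD)

lemma TOPx:
  assumes x: "x \<in> I" and p: "p \<in> g x ` qboundary V"
  shows "p \<in> tile C g x \<and> p \<in> closure (sphere 0 1 - tile C g x)"
proof -
  obtain w where w: "w \<in> qboundary V" "p = g x w" using p by auto
  have t: "w \<in> closure C \<and> w \<in> closure (sphere 0 1 - closure C)"
    using TOP[OF qboundary_sphere[OF sq] qboundary_circle[OF sq] Ccomp w(1)] .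
  have "p \<in> tile C g x" using t w by (simp add: tile_def)
  moreover have "g x ` closure (sphere 0 1 - closure C) \<subseteq> closure (g x ` (sphere 0 1 - closure C))"
    by (rule image_closure_subset)
       (auto intro: gcont[OF x] closure_subset[THEN subsetD])
  moreover have "g x ` (sphere 0 1 - closure C) \<subseteq> sphere 0 1 - tile C g x"
  proof
    fix z assume "z \<in> g x ` (sphere 0 1 - closure C)"
    then obtain u where u: "u \<in> sphere 0 1" "u \<notin> closure C" "z = g x u" by blast
    have "z \<in> sphere 0 1" using u gsph[OF x] by simp
    moreover have "z \<notin> g x ` closure C"
    proof
      assume "z \<in> g x ` closure C"
      then obtain u' where "u' \<in> closure C" "z = g x u'" by blast
      then have "u' = u" using u ginj[OF x] by simp
      then show False using u \<open>u' \<in> closure C\<close> by simp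
    qed
    ultimately show "z \<in> sphere 0 1 - tile C g x" by (simp add: tile_def)
  qed
  ultimately have "g x ` closure (sphere 0 1 - closure C) \<subseteq> closure (sphere 0 1 - tile C g x)"
    by (meson closure_mono subset_trans)
  moreover have "p \<in> g x ` closure (sphere 0 1 - closure C)" using t w by blast
  ultimately show ?thesis using \<open>p \<in> tile C g x\<close> by blast
qed

lemma tile_closure: "x \<in> I \<Longrightarrow> tile C g x = closure (g x ` C)"
  unfolding tile_def
  by (rule closure_injective_linear_image[OF orthogonal_transformation_linear[OF orth] orthogonal_transformation_inj[OF orth]])

lemma qb_edge: "k < 4 \<Longrightarrow> qedge V k \<subseteq> qboundary V"
  unfolding qboundary_def by auto

lemma atleast2:
  assumes x: "x \<in> I" and k: "k < 4"
  shows "\<exists>y\<in>I. y \<noteq> x \<and> (\<exists>l<4. tedge V g y l = tedge V g x k)"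
proof -
  obtain m where m: "m \<in> qedge V k" "m \<noteq> V k" "m \<noteq> V (nxt k)" using sq_mid[OF sq k] by blast
  define p where "p = g x m"
  have "p \<in> g x ` qboundary V" using m qb_edge k p_def by blast
  then have pt: "p \<in> tile C g x" and pc: "p \<in> closure (sphere 0 1 - tile C g x)" using TOPx x by auto
  have "sphere 0 1 - tile C g x \<subseteq> (\<Union>y\<in>I - {x}. tile C g y)" using cover by blast
  moreover have "closed (\<Union>y\<in>I - {x}. tile C g y)"
    using finI tile_compact by (intro closed_UN) (auto intro: compact_imp_closed)
  ultimately have "p \<in> (\<Union>y\<in>I - {x}. tile C g y)" using pc closure_minimal by blast
  then obtain y where y: "y \<in> I" "y \<noteq> x" "p \<in> tile C g y" by auto
  have pe: "p \<in> tedge V g x k" using m p_def tedge_img x by auto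
  from e2e[OF x y(1) y(2)[symmetric]] show ?thesis
  proof (elim disjE exE conjE)
    assume "tile C g x \<inter> tile C g y = {}" then show ?thesis using pt y by auto
  next
    fix k' l' assume "k' < 4" "l' < 4" "tile C g x \<inter> tile C g y = {tvert V g x k'}"
    then have "p = g x (V k')" using pt y by (auto simp: tvert_def)
    then have "m = V k'" using p_def ginj x by simp
    then have "k' = k \<or> k' = nxt k" using sq_vert_on_edge[OF sq k \<open>k'<4\<close>] m by simp
    then show ?thesis using m \<open>m = V k'\<close> by auto
  next
    fix k' l' assume kl: "k' < 4" "l' < 4" "tile C g x \<inter> tile C g y = tedge V g x k'"
      "tedge V g x k' = tedge V g y l'"
    then have "p \<in> g x ` qedge V k'" using pt y tedge_img x by auto
    then have "m \<in> qedge V k'" using p_def ginj x by auto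
    then have "k' = k" using sq_int[OF sq k kl(1)] m by blast
    then show ?thesis using kl y by metis
  qed
qed

end

lemma convex_cone_gt:
  fixes p :: "real^3"
  assumes "d \<ge> 0"
  shows "convex {y. p \<bullet> y > d * norm y}"
proof (rule convexI)
  fix u w :: "real^3" and s t :: real
  assume u: "u \<in> {y. p \<bullet> y > d * norm y}" and w: "w \<in> {y. p \<bullet> y > d * norm y}"
    and st: "0 \<le> s" "0 \<le> t" "s + t = 1"
  have "d * norm (s *\<^sub>R u + t *\<^sub>R w) \<le> d * (s * norm u + t * norm w)"
    using assms st norm_triangle_ineq[of "s *\<^sub>R u" "t *\<^sub>R w"]
    by (intro mult_left_mono) auto
  also have "\<dots> = s * (d * norm u) + t * (d * norm w)" by (simp add: algebra_simps)
  also have "\<dots> < s * (p \<bullet> u) + t * (p \<bullet> w)"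
  proof (cases "s = 0")
    case True then show ?thesis using w st by simp
  next
    case False then have "s > 0" using st by simp
    then have "s * (d * norm u) < s * (p \<bullet> u)" using u by simp
    moreover have "t * (d * norm w) \<le> t * (p \<bullet> w)" using w st by (intro mult_left_mono) auto
    ultimately show ?thesis by linarith
  qed
  also have "\<dots> = p \<bullet> (s *\<^sub>R u + t *\<^sub>R w)" by (simp add: inner_add_right)
  finally show "s *\<^sub>R u + t *\<^sub>R w \<in> {y. p \<bullet> y > d * norm y}" by simp
qed

locale geo =
  fixes v w :: "real^3" and d :: real
  assumes gd: "good v w" and d: "0 \<le> d" "d < 1"
begin

definition "c = v \<bullet> w"
definition "a1 = v - c *\<^sub>R w"
definition "a2 = w - c *\<^sub>R v"
definition "p = sgn (v + w)"
definition "nv = cross3 v w"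
definition "Op = {x. a1 \<bullet> x > 0 \<and> a2 \<bullet> x > 0 \<and> p \<bullet> x > d}"
definition "N = sphere 0 1 \<inter> Op"
definition "Hp = {x \<in> N. nv \<bullet> x > 0}"
definition "Hm = {x \<in> N. nv \<bullet> x < 0}"

lemma vv: "v \<bullet> v = 1" "w \<bullet> w = 1" "norm v = 1" "norm w = 1"
  using gd by (auto simp: good_def norm_eq_1)

lemma cb: "c < 1" "c > -1" using good_dot[OF gd] by (auto simp: c_def)

lemma c2: "1 - c * c > 0" using cb by (smt (verit) mult_less_cancel_right2 mult_minus_left)

lemma vw0: "v + w \<noteq> 0"
proof
  assume "v + w = 0" then have "v = - w" by (simp add: eq_neg_iff_add_eq_0)
  then show False using gd by (simp add: good_def)
qed

lemma Op_open: "open Op"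
  unfolding Op_def by (intro open_Collect_conj open_Collect_less continuous_intros)

lemma p_unit: "norm p = 1" using vw0 by (simp add: p_def norm_sgn)

lemma a1p: "a1 \<bullet> (v + w) = 1 - c * c" "a2 \<bullet> (v + w) = 1 - c * c"
  by (simp_all add: a1_def a2_def inner_add_right inner_diff_left vv c_def inner_commute[of w v] algebra_simps)

lemma p_Op: "p \<in> Op"
proof -
  have n: "norm (v + w) > 0" using vw0 by simp
  have "a1 \<bullet> p = (1 - c * c) / norm (v + w)" "a2 \<bullet> p = (1 - c * c) / norm (v + w)"
    using a1p by (simp_all add: p_def sgn_div_norm divide_inverse_commute inner_scaleR_right)
  moreover have "p \<bullet> p = 1" using p_unit by (simp add: norm_eq_1)
  ultimately show ?thesis using n c2 d unfolding Op_def by auto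
qed

lemma p_N: "p \<in> N" using p_Op p_unit by (simp add: N_def)

lemma p_arc: "p \<in> sarc v w"
proof -
  have "sgn ((1 - 1/2) *\<^sub>R v + (1/2) *\<^sub>R w) = sgn ((1/2::real) *\<^sub>R (v + w))"
    by (simp add: scaleR_add_right)
  also have "\<dots> = p" by (simp add: p_def sgn_scaleR)
  finally show ?thesis unfolding sarc_def by (intro image_eqI[of _ _ "1/2"]) auto
qed

lemma p_ne: "p \<noteq> v" "p \<noteq> w"
proof -
  define n where "n = norm (v + w)"
  have n0: "n \<noteq> 0" using vw0 n_def by simp
  have pe: "v + w = n *\<^sub>R p" using n0 by (simp add: p_def sgn_div_norm n_def)
  show "p \<noteq> v"
  proof
    assume "p = v"
    then have "(1 - n) *\<^sub>R v + 1 *\<^sub>R w = 0" using pe by (simp add: algebra_simps)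
    from unit_indep[OF gd this] show False by simp
  qed
  show "p \<noteq> w"
  proof
    assume "p = w"
    then have "1 *\<^sub>R v + (1 - n) *\<^sub>R w = 0" using pe by (simp add: algebra_simps)
    from unit_indep[OF gd this] show False by simp
  qed
qed

lemma nv_v: "nv \<bullet> v = 0" "nv \<bullet> w = 0"
  unfolding nv_def using dot_cross_self by (auto simp: inner_commute)

lemma nv_nz: "nv \<noteq> 0"
proof -
  have "(norm nv)^2 = 1 - c * c"
    unfolding nv_def norm_cross using vv by (simp add: c_def power2_eq_square)
  then show ?thesis using c2 by auto
qed

lemma arc_nv: "x \<in> sarc v w \<Longrightarrow> nv \<bullet> x = 0"
  using sarc_cone[of x v w] nv_v by (auto simp: inner_add_right)

lemma N_arc:
  assumes x: "x \<in> N" "nv \<bullet> x = 0"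
  shows "x \<in> sarc v w"
proof -
  define al where "al = (x \<bullet> v - c * (x \<bullet> w)) / (1 - c * c)"
  define be where "be = (x \<bullet> w - c * (x \<bullet> v)) / (1 - c * c)"
  define r where "r = x - al *\<^sub>R v - be *\<^sub>R w"
  have cc: "1 - c * c \<noteq> 0" using c2 by simp
  have alD: "al * (1 - c * c) = x \<bullet> v - c * (x \<bullet> w)" using cc by (simp add: al_def)
  have beD: "be * (1 - c * c) = x \<bullet> w - c * (x \<bullet> v)" using cc by (simp add: be_def)
  have s1: "al + be * c = x \<bullet> v"
  proof -
    have "(al + be * c) * (1 - c * c) = al * (1 - c * c) + c * (be * (1 - c * c))" by (simp add: algebra_simps)
    also have "\<dots> = (x \<bullet> v) * (1 - c * c)" unfolding alD beD by (simp add: algebra_simps)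
    finally show ?thesis using cc by simp
  qed
  have s2: "al * c + be = x \<bullet> w"
  proof -
    have "(al * c + be) * (1 - c * c) = c * (al * (1 - c * c)) + be * (1 - c * c)" by (simp add: algebra_simps)
    also have "\<dots> = (x \<bullet> w) * (1 - c * c)" unfolding alD beD by (simp add: algebra_simps)
    finally show ?thesis using cc by simp
  qed
  have rv: "r \<bullet> v = 0"
  proof -
    have "r \<bullet> v = x \<bullet> v - al - be * c" by (simp add: r_def inner_diff_left vv c_def inner_commute[of w v])
    then show ?thesis using s1 by simp
  qed
  have rw: "r \<bullet> w = 0"
  proof -
    have "r \<bullet> w = x \<bullet> w - al * c - be" by (simp add: r_def inner_diff_left vv c_def)
    then show ?thesis using s2 by simp
  qed
  have "cross3 r nv = 0" unfolding nv_def Lagrange using rv rw by simp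
  moreover have "r \<bullet> nv = 0" using x(2) nv_v by (simp add: r_def inner_diff_left inner_diff_right inner_commute[of _ nv])
  ultimately have "(norm r * norm nv)^2 = 0" using norm_cross_dot[of r nv] by simp
  then have "r = 0" using nv_nz by simp
  then have xe: "x = al *\<^sub>R v + be *\<^sub>R w" by (simp add: r_def algebra_simps)
  have "a1 \<bullet> x = x \<bullet> v - c * (x \<bullet> w)" by (simp add: a1_def inner_diff_left inner_commute[of v x] inner_commute[of w x])
  moreover have "a2 \<bullet> x = x \<bullet> w - c * (x \<bullet> v)" by (simp add: a2_def inner_diff_left inner_commute[of v x] inner_commute[of w x])
  ultimately have "x \<bullet> v - c * (x \<bullet> w) > 0" "x \<bullet> w - c * (x \<bullet> v) > 0"
    using x(1) by (auto simp: N_def Op_def)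
  then have alp: "al > 0" and bep: "be > 0" using c2 by (simp_all add: al_def be_def)
  define t where "t = be / (al + be)"
  have t01: "t \<in> {0..1}" using alp bep by (simp add: t_def)
  have "(1 - t) *\<^sub>R v + t *\<^sub>R w = (1 / (al + be)) *\<^sub>R x"
    using alp bep xe by (simp add: t_def field_simps scaleR_add_right scaleR_add_left)
  then have "sgn ((1 - t) *\<^sub>R v + t *\<^sub>R w) = sgn x" using alp bep by (simp add: sgn_scaleR)
  also have "\<dots> = x" using x(1) by (simp add: N_def sgn_div_norm)
  finally show ?thesis unfolding sarc_def using t01 by (intro image_eqI[of _ _ t]) auto
qed

definition "Kp = {y. a1 \<bullet> y > 0} \<inter> {y. a2 \<bullet> y > 0} \<inter> {y. p \<bullet> y > d * norm y} \<inter> {y. nv \<bullet> y > 0}"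
definition "Km = {y. a1 \<bullet> y > 0} \<inter> {y. a2 \<bullet> y > 0} \<inter> {y. p \<bullet> y > d * norm y} \<inter> {y. nv \<bullet> y < 0}"

lemma K_nz: "y \<in> Kp \<Longrightarrow> y \<noteq> 0" "y \<in> Km \<Longrightarrow> y \<noteq> 0" by (auto simp: Kp_def Km_def)

lemma sgn_scale_pos: "norm y > 0 \<Longrightarrow> (a::real^3) \<bullet> sgn y > b \<longleftrightarrow> a \<bullet> y > b * norm y"
  by (simp add: sgn_div_norm inner_scaleR_right divide_simps mult.commute)

lemma Hp_img: "Hp = sgn ` Kp"
proof
  show "Hp \<subseteq> sgn ` Kp"
  proof
    fix x assume "x \<in> Hp"
    then have "norm x = 1" "x \<in> Kp" by (auto simp: Hp_def N_def Op_def Kp_def)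
    then show "x \<in> sgn ` Kp" by (intro image_eqI[of _ _ x]) (auto simp: sgn_div_norm)
  qed
  show "sgn ` Kp \<subseteq> Hp"
  proof
    fix x assume "x \<in> sgn ` Kp"
    then obtain y where y: "y \<in> Kp" "x = sgn y" by blast
    then have n: "norm y > 0" using K_nz by simp
    have "a1 \<bullet> x > 0" "a2 \<bullet> x > 0" "nv \<bullet> x > 0" "p \<bullet> x > d"
      using y sgn_scale_pos[OF n] by (auto simp: Kp_def)
    moreover have "norm x = 1" using y n by (simp add: norm_sgn)
    ultimately show "x \<in> Hp" by (simp add: Hp_def N_def Op_def)
  qed
qed

lemma Hm_img: "Hm = sgn ` Km"
proof
  show "Hm \<subseteq> sgn ` Km"
  proof
    fix x assume "x \<in> Hm"
    then have "norm x = 1" "x \<in> Km" by (auto simp: Hm_def N_def Op_def Km_def)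
    then show "x \<in> sgn ` Km" by (intro image_eqI[of _ _ x]) (auto simp: sgn_div_norm)
  qed
  show "sgn ` Km \<subseteq> Hm"
  proof
    fix x assume "x \<in> sgn ` Km"
    then obtain y where y: "y \<in> Km" "x = sgn y" by blast
    then have n: "norm y > 0" using K_nz by simp
    have "nv \<bullet> x = (nv \<bullet> y) / norm y" using y by (simp add: sgn_div_norm inner_scaleR_right divide_inverse_commute)
    then have "nv \<bullet> x < 0" using y n by (simp add: Km_def divide_neg_pos)
    moreover have "a1 \<bullet> x > 0" "a2 \<bullet> x > 0" "p \<bullet> x > d"
      using y sgn_scale_pos[OF n] by (auto simp: Km_def)
    moreover have "norm x = 1" using y n by (simp add: norm_sgn)
    ultimately show "x \<in> Hm" by (simp add: Hm_def N_def Op_def)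
  qed
qed

lemma H_conn: "connected Hp" "connected Hm"
proof -
  have "convex Kp" unfolding Kp_def
    by (intro convex_Int convex_halfspace_gt convex_cone_gt d)
  moreover have "continuous_on Kp sgn" using K_nz by (intro continuous_on_sgn continuous_intros) auto
  ultimately show "connected Hp" unfolding Hp_img
    by (meson connected_continuous_image convex_connected)
  have "convex Km" unfolding Km_def
    by (intro convex_Int convex_halfspace_gt convex_halfspace_lt convex_cone_gt d)
  moreover have "continuous_on Km sgn" using K_nz by (intro continuous_on_sgn continuous_intros) auto
  ultimately show "connected Hm" unfolding Hm_img
    by (meson connected_continuous_image convex_connected)
qed

lemma N_dist: "x \<in> N \<Longrightarrow> (norm (x - p))^2 < 2 - 2 * d"
proof -
  assume x: "x \<in> N"
  have "x \<bullet> x = 1" "p \<bullet> p = 1" using x p_unit by (auto simp: N_def norm_eq_1)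
  then have "(norm (x - p))^2 = 2 - 2 * (p \<bullet> x)"
    by (simp add: power2_norm_eq_inner inner_diff_left inner_diff_right inner_commute[of x p])
  then show ?thesis using x by (simp add: N_def Op_def)
qed

end

context til begin

lemma compmax:
  assumes t: "t \<in> I" and H: "connected H" "H \<subseteq> sphere 0 1 - g t ` qboundary V"
    "H \<inter> g t ` C \<noteq> {}"
  shows "H \<subseteq> g t ` C"
proof -
  define gi where "gi = inv (g t)"
  have ot: "orthogonal_transformation gi" using orth[OF t] orthogonal_transformation_inv gi_def by blast
  have gig: "gi (g t u) = u" for u unfolding gi_def by (rule inv_f_f[OF orthogonal_transformation_inj[OF orth[OF t]]])
  have ggi: "g t (gi z) = z" for z unfolding gi_def by (rule surj_f_inv_f[OF orthogonal_transformation_surj[OF orth[OF t]]])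
  have "connected (gi ` H)"
    using H(1) ot by (meson connected_continuous_image linear_continuous_on linear_conv_bounded_linear orthogonal_transformation_linear)
  moreover have "gi ` H \<subseteq> sphere 0 1 - qboundary V"
  proof
    fix u assume "u \<in> gi ` H"
    then obtain z where z: "z \<in> H" "u = gi z" by blast
    have "norm u = 1" using z H(2) ot orthogonal_transformation_norm by fastforce
    moreover have "u \<notin> qboundary V"
    proof
      assume "u \<in> qboundary V" then have "g t u \<in> g t ` qboundary V" by blast
      then show False using z ggi H(2) by auto
    qed
    ultimately show "u \<in> sphere 0 1 - qboundary V" by simp
  qed
  moreover have "C \<inter> gi ` H \<noteq> {}"
  proof -
    obtain z c' where "z \<in> H" "c' \<in> C" "z = g t c'" using H(3) by blast
    then have "gi z = c'" using gig by simp
    then have "c' \<in> C \<inter> gi ` H" using \<open>z \<in> H\<close> \<open>c' \<in> C\<close> by blast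
    then show ?thesis by blast
  qed
  ultimately have "gi ` H \<subseteq> C" using components_maximal[OF Ccomp] by blast
  then have "g t ` gi ` H \<subseteq> g t ` C" by blast
  moreover have "g t ` gi ` H = H" using ggi by (simp add: image_image)
  ultimately show ?thesis by simp
qed

lemma tedge_compact: "t \<in> I \<Longrightarrow> j < 4 \<Longrightarrow> compact (tedge V g t j)"
  unfolding tedge_def using gam_arc[OF good_t] compact_path_image arc_imp_path by metis

lemma gqb: "t \<in> I \<Longrightarrow> g t ` qboundary V = (\<Union>j<4. tedge V g t j)"
  using tedge_img by (auto simp: qboundary_def)

lemma C_sph: "C \<subseteq> sphere 0 1 - qboundary V" using Ccomp in_components_subset by blast

lemma other_far:
  assumes x: "x \<in> I" "k < 4" and t: "t \<in> I" "j < 4" "tedge V g t j = tedge V g x k"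
  shows "\<exists>r>0. \<forall>u. norm (u - sgn (tvert V g x k + tvert V g x (nxt k))) < r \<longrightarrow>
            (\<forall>j'<4. j' \<noteq> j \<longrightarrow> u \<notin> tedge V g t j')"
proof -
  define v w where "v = tvert V g x k" and "w = tvert V g x (nxt k)"
  interpret G: geo v w 0 using good_t[OF x] v_def w_def by unfold_locales auto
  define p0 where "p0 = sgn (v + w)"
  have pp: "G.p = p0" by (simp add: G.p_def p0_def)
  have pe: "p0 \<in> tedge V g t j" using G.p_arc pp t(3) x by (simp add: tedge_def v_def w_def)
  then obtain u0 where u0: "u0 \<in> qedge V j" "p0 = g t u0" using tedge_img[OF t(1)] by auto
  have ee: "{tvert V g t j, tvert V g t (nxt j)} = {v, w}"
    using edge_ends[OF x(1) t(1) x(2) t(2) t(3)[symmetric]] v_def w_def by auto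
  have "u0 \<noteq> V j" "u0 \<noteq> V (nxt j)"
    using ee u0 G.p_ne pp by (auto simp: tvert_def doubleton_eq_iff)
  have nin: "p0 \<notin> tedge V g t j'" if "j' < 4" "j' \<noteq> j" for j'
  proof
    assume "p0 \<in> tedge V g t j'"
    then obtain u1 where "u1 \<in> qedge V j'" "p0 = g t u1" using tedge_img[OF t(1)] by auto
    then have "u0 \<in> qedge V j'" using u0 ginj[OF t(1)] by auto
    then show False using sq_int[OF sq t(2) that(1)] that u0 \<open>u0 \<noteq> V j\<close> \<open>u0 \<noteq> V (nxt j)\<close> by blast
  qed
  define F where "F = (\<Union>j'\<in>{j'. j' < 4 \<and> j' \<noteq> j}. tedge V g t j')"
  have "closed F" unfolding F_def using tedge_compact[OF t(1)]
    by (intro closed_UN) (auto intro: compact_imp_closed)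
  moreover have "p0 \<notin> F" using nin F_def by auto
  ultimately obtain r where r: "r > 0" "ball p0 r \<subseteq> - F"
    by (metis open_Compl open_contains_ball ComplI)
  show ?thesis
  proof (intro exI[of _ r] conjI allI impI r(1))
    fix u j' assume "norm (u - sgn (tvert V g x k + tvert V g x (nxt k))) < r" "j' < 4" "j' \<noteq> j"
    then have "u \<in> ball p0 r" by (simp add: p0_def v_def w_def dist_norm norm_minus_commute)
    then show "u \<notin> tedge V g t j'" using r \<open>j' < 4\<close> \<open>j' \<noteq> j\<close> F_def by auto
  qed
qed

end

context til begin

lemma side:
  assumes x: "x \<in> I" "k < 4" and vw: "v = tvert V g x k" "w = tvert V g x (nxt k)"
    and d: "0 \<le> d" "d < 1"
    and t: "t \<in> I" "j < 4" "tedge V g t j = tedge V g x k"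
    and far: "\<forall>u \<in> geo.N v w d. \<forall>j'<4. j' \<noteq> j \<longrightarrow> u \<notin> tedge V g t j'"
  shows "(geo.Hp v w d \<subseteq> g t ` C \<and> geo.Hp v w d \<inter> g t ` C \<noteq> {}) \<or>
         (geo.Hm v w d \<subseteq> g t ` C \<and> geo.Hm v w d \<inter> g t ` C \<noteq> {})"
proof -
  interpret G: geo v w d using good_t[OF x] vw d by unfold_locales auto
  have e: "tedge V g t j = sarc v w" using t(3) vw by (simp add: tedge_def)
  have pe: "G.p \<in> tedge V g t j" using G.p_arc e by simp
  then have "G.p \<in> g t ` qboundary V" using gqb[OF t(1)] t(2) by auto
  then have "G.p \<in> tile C g t" using TOPx[OF t(1)] by blast
  then have "G.p \<in> closure (g t ` C)" using tile_closure[OF t(1)] by simp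
  then have "G.Op \<inter> g t ` C \<noteq> {}"
    using G.Op_open G.p_Op open_Int_closure_eq_empty by blast
  then obtain q where q: "q \<in> G.Op" "q \<in> g t ` C" by blast
  then obtain c' where c': "c' \<in> C" "q = g t c'" by blast
  have "c' \<in> sphere 0 1 - qboundary V" using c' C_sph by blast
  then have qS: "q \<in> sphere 0 1" and qG: "q \<notin> g t ` qboundary V"
    using c' gsph[OF t(1)] ginj[OF t(1)] by auto
  have qN: "q \<in> G.N" using q qS by (simp add: G.N_def)
  have "q \<notin> sarc v w" using qG e gqb[OF t(1)] t(2) by auto
  then have "G.nv \<bullet> q \<noteq> 0" using G.N_arc qN by blast
  then have qH: "q \<in> G.Hp \<or> q \<in> G.Hm" using qN by (auto simp: G.Hp_def G.Hm_def)
  have avoid: "u \<notin> g t ` qboundary V" if "u \<in> G.N" "G.nv \<bullet> u \<noteq> 0" for u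
  proof
    assume "u \<in> g t ` qboundary V"
    then obtain j' where j': "j' < 4" "u \<in> tedge V g t j'" using gqb[OF t(1)] by auto
    show False
    proof (cases "j' = j")
      case True then have "u \<in> sarc v w" using j' e by simp
      then show False using G.arc_nv that by blast
    next
      case False then show False using far that j' by blast
    qed
  qed
  have Hp_sub: "G.Hp \<subseteq> sphere 0 1 - g t ` qboundary V"
  proof
    fix u assume "u \<in> G.Hp"
    then have "u \<in> G.N" "G.nv \<bullet> u > 0" by (auto simp: G.Hp_def)
    then show "u \<in> sphere 0 1 - g t ` qboundary V" using avoid[of u] by (auto simp: G.N_def)
  qed
  have Hm_sub: "G.Hm \<subseteq> sphere 0 1 - g t ` qboundary V"
  proof
    fix u assume "u \<in> G.Hm"
    then have "u \<in> G.N" "G.nv \<bullet> u < 0" by (auto simp: G.Hm_def)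
    then show "u \<in> sphere 0 1 - g t ` qboundary V" using avoid[of u] by (auto simp: G.N_def)
  qed
  show ?thesis
  proof (cases "q \<in> G.Hp")
    case True
    then have "G.Hp \<inter> g t ` C \<noteq> {}" using q by blast
    then show ?thesis using compmax[OF t(1) G.H_conn(1) Hp_sub] by blast
  next
    case False
    then have "q \<in> G.Hm" using qH by blast
    then have "G.Hm \<inter> g t ` C \<noteq> {}" using q by blast
    then show ?thesis using compmax[OF t(1) G.H_conn(2) Hm_sub] by blast
  qed
qed

lemma atmost2:
  assumes x: "x \<in> I" "k < 4" and y: "y \<in> I" "l < 4" "tedge V g y l = tedge V g x k"
    and z: "z \<in> I" "m < 4" "tedge V g z m = tedge V g x k"
    and dist: "x \<noteq> y" "x \<noteq> z" "y \<noteq> z"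
  shows False
proof -
  define v w where "v = tvert V g x k" and "w = tvert V g x (nxt k)"
  define p0 where "p0 = sgn (v + w)"
  obtain rx where rx: "rx > 0" "\<forall>u. norm (u - p0) < rx \<longrightarrow> (\<forall>j'<4. j' \<noteq> k \<longrightarrow> u \<notin> tedge V g x j')"
    using other_far[OF x x refl] p0_def v_def w_def by blast
  obtain ry where ry: "ry > 0" "\<forall>u. norm (u - p0) < ry \<longrightarrow> (\<forall>j'<4. j' \<noteq> l \<longrightarrow> u \<notin> tedge V g y j')"
    using other_far[OF x y] p0_def v_def w_def by blast
  obtain rz where rz: "rz > 0" "\<forall>u. norm (u - p0) < rz \<longrightarrow> (\<forall>j'<4. j' \<noteq> m \<longrightarrow> u \<notin> tedge V g z j')"
    using other_far[OF x z] p0_def v_def w_def by blast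
  define r where "r = min rx (min ry rz)"
  have r: "r > 0" "r \<le> rx" "r \<le> ry" "r \<le> rz" using rx ry rz by (auto simp: r_def)
  define d where "d = max 0 (1 - r^2 / 2)"
  have "d \<ge> 1 - r^2 / 2" by (simp add: d_def)
  moreover have "r^2 > 0" using r by simp
  ultimately have d: "0 \<le> d" "d < 1" "2 - 2 * d \<le> r^2" unfolding d_def by (auto simp: max_def)
  interpret G: geo v w d using good_t[OF x] v_def w_def d by unfold_locales auto
  have pp: "G.p = p0" by (simp add: G.p_def p0_def)
  have close: "norm (u - p0) < r" if "u \<in> G.N" for u
  proof -
    have "(norm (u - p0))^2 < r^2" using G.N_dist[OF that] d pp by simp
    then show ?thesis using r(1) by (simp add: power_less_imp_less_base)
  qed
  have fx: "\<forall>u \<in> G.N. \<forall>j'<4. j' \<noteq> k \<longrightarrow> u \<notin> tedge V g x j'" using close rx r by fastforce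
  have fy: "\<forall>u \<in> G.N. \<forall>j'<4. j' \<noteq> l \<longrightarrow> u \<notin> tedge V g y j'" using close ry r by fastforce
  have fz: "\<forall>u \<in> G.N. \<forall>j'<4. j' \<noteq> m \<longrightarrow> u \<notin> tedge V g z j'" using close rz r by fastforce
  have Sx: "(G.Hp \<subseteq> g x ` C \<and> G.Hp \<inter> g x ` C \<noteq> {}) \<or> (G.Hm \<subseteq> g x ` C \<and> G.Hm \<inter> g x ` C \<noteq> {})"
    using side[OF x v_def w_def d(1,2) x refl fx] .
  have Sy: "(G.Hp \<subseteq> g y ` C \<and> G.Hp \<inter> g y ` C \<noteq> {}) \<or> (G.Hm \<subseteq> g y ` C \<and> G.Hm \<inter> g y ` C \<noteq> {})"
    using side[OF x v_def w_def d(1,2) y fy] .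
  have Sz: "(G.Hp \<subseteq> g z ` C \<and> G.Hp \<inter> g z ` C \<noteq> {}) \<or> (G.Hm \<subseteq> g z ` C \<and> G.Hm \<inter> g z ` C \<noteq> {})"
    using side[OF x v_def w_def d(1,2) z fz] .
  have D: "g x ` C \<inter> g y ` C = {}" "g x ` C \<inter> g z ` C = {}" "g y ` C \<inter> g z ` C = {}"
    using disj x y z dist by auto
  show False using Sx Sy Sz D by blast
qed

end

lemma dcount:
  assumes "finite A" "finite B"
  shows "(\<Sum>a\<in>A. card {b\<in>B. R a b}) = (\<Sum>b\<in>B. card {a\<in>A. R a b})"
proof -
  have 1: "card {b\<in>B. R a b} = (\<Sum>b\<in>B. if R a b then 1 else 0)" for a
    using assms(2) by (simp add: sum.inter_filter[symmetric])
  have 2: "card {a\<in>A. R a b} = (\<Sum>a\<in>A. if R a b then 1 else 0)" for b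
    using assms(1) by (simp add: sum.inter_filter[symmetric])
  show ?thesis unfolding 1 2 by (rule sum.swap)
qed

lemma card_le2:
  assumes "finite A" "\<And>a b c. a \<in> A \<Longrightarrow> b \<in> A \<Longrightarrow> c \<in> A \<Longrightarrow> a \<noteq> b \<Longrightarrow> a \<noteq> c \<Longrightarrow> b \<noteq> c \<Longrightarrow> False"
  shows "card A \<le> 2"
proof (rule ccontr)
  assume "\<not> card A \<le> 2"
  then have "card A \<ge> 3" by simp
  then obtain B where "B \<subseteq> A" "card B = 3" using obtain_subset_with_card_n by metis
  then obtain a b c where "B = {a, b, c}" "a \<noteq> b" "a \<noteq> c" "b \<noteq> c" using card_3_iff by metis
  then show False using assms(2) \<open>B \<subseteq> A\<close> by blast
qed

definition prv :: "nat \<Rightarrow> nat" where "prv k = (k + 3) mod 4"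

lemma prv_simps[simp]: "prv 0 = 3" "prv 1 = 0" "prv (Suc 0) = 0" "prv 2 = 1" "prv 3 = 2"
  by (simp_all add: prv_def)

lemma nxt_prv: "k < 4 \<Longrightarrow> nxt (prv k) = k" by (drule lt4_cases) auto
lemma prv_nxt: "k < 4 \<Longrightarrow> prv (nxt k) = k" by (drule lt4_cases) auto
lemma prv_lt4: "k < 4 \<Longrightarrow> prv k < 4" by (simp add: prv_def)

context til begin

definition "Tv v = {x \<in> I. \<exists>k<4. tvert V g x k = v}"
definition "kap v x = (THE k. k < 4 \<and> tvert V g x k = v)"
definition "Ed v x = {tedge V g x (kap v x), tedge V g x (prv (kap v x))}"
definition "incd v e = {x \<in> Tv v. e \<in> Ed v x}"

lemma kap: assumes "x \<in> Tv v" shows "kap v x < 4" "tvert V g x (kap v x) = v"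
proof -
  obtain k where k: "k < 4" "tvert V g x k = v" "x \<in> I" using assms Tv_def by auto
  have "kap v x = k" unfolding kap_def using k tvert_inj by (intro the_equality) auto
  then show "kap v x < 4" "tvert V g x (kap v x) = v" using k by auto
qed

lemma kap_eq: "x \<in> I \<Longrightarrow> k < 4 \<Longrightarrow> tvert V g x k = v \<Longrightarrow> x \<in> Tv v \<and> kap v x = k"
  using kap[of x v] tvert_inj by (auto simp: Tv_def)

lemma edge_in_Ed:
  assumes "x \<in> I" "k < 4" "v = tvert V g x k \<or> v = tvert V g x (nxt k)"
  shows "x \<in> Tv v \<and> tedge V g x k \<in> Ed v x"
  using assms
proof (elim disjE)
  assume "v = tvert V g x k"
  then show ?thesis using kap_eq[OF assms(1,2)] by (simp add: Ed_def)
next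
  assume "v = tvert V g x (nxt k)"
  then have "x \<in> Tv v \<and> kap v x = nxt k" using kap_eq[OF assms(1) nxt_lt4[OF assms(2)]] by simp
  then show ?thesis using prv_nxt[OF assms(2)] by (simp add: Ed_def)
qed

lemma E_eq: "edges_at V g I v = (\<Union>x\<in>Tv v. Ed v x)"
proof
  show "edges_at V g I v \<subseteq> (\<Union>x\<in>Tv v. Ed v x)"
    unfolding edges_at_def using edge_in_Ed by blast
  show "(\<Union>x\<in>Tv v. Ed v x) \<subseteq> edges_at V g I v"
  proof
    fix e assume "e \<in> (\<Union>x\<in>Tv v. Ed v x)"
    then obtain x where x: "x \<in> Tv v" "e \<in> Ed v x" by blast
    have xI: "x \<in> I" using x Tv_def by auto
    show "e \<in> edges_at V g I v"
    proof (cases "e = tedge V g x (kap v x)")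
      case True then show ?thesis using kap[OF x(1)] xI unfolding edges_at_def by fastforce
    next
      case False
      then have "e = tedge V g x (prv (kap v x))" using x(2) Ed_def by auto
      moreover have "v = tvert V g x (nxt (prv (kap v x)))" using kap[OF x(1)] nxt_prv by simp
      ultimately show ?thesis using kap[OF x(1)] xI prv_lt4 unfolding edges_at_def by blast
    qed
  qed
qed

lemma Tv_fin: "finite (Tv v)" using finI by (simp add: Tv_def)

lemma Ed_card: assumes "x \<in> Tv v" shows "card (Ed v x) = 2"
proof -
  have xI: "x \<in> I" using assms Tv_def by auto
  define k where "k = kap v x"
  have k: "k < 4" "tvert V g x k = v" using kap[OF assms] k_def by auto
  have "tedge V g x k \<noteq> tedge V g x (prv k)"
  proof
    assume "tedge V g x k = tedge V g x (prv k)"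
    from edge_ends[OF xI xI prv_lt4[OF k(1)] k(1) this[symmetric]]
    have "tvert V g x k = tvert V g x (prv k) \<or> tvert V g x (nxt k) = tvert V g x (prv k)"
      using nxt_prv[OF k(1)] by auto
    then have "k = prv k \<or> nxt k = prv k" using tvert_inj xI k(1) prv_lt4 nxt_lt4 by metis
    then show False using lt4_cases[OF k(1)] by auto
  qed
  then show ?thesis by (simp add: Ed_def k_def)
qed

lemma incd_card:
  assumes e: "e \<in> edges_at V g I v"
  shows "card (incd v e) = 2"
proof (rule antisym)
  show "card (incd v e) \<le> 2"
  proof (rule card_le2)
    show "finite (incd v e)" using Tv_fin by (simp add: incd_def)
  next
    fix a b c assume abc: "a \<in> incd v e" "b \<in> incd v e" "c \<in> incd v e" "a \<noteq> b" "a \<noteq> c" "b \<noteq> c"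
    have ex: "\<exists>j<4. tedge V g t j = e" if "t \<in> incd v e" for t
    proof -
      have "t \<in> Tv v" "e \<in> Ed v t" using that by (auto simp: incd_def)
      then show ?thesis using kap[of t v] prv_lt4[of "kap v t"] unfolding Ed_def by blast
    qed
    obtain ja jb jc where j: "ja < 4" "tedge V g a ja = e" "jb < 4" "tedge V g b jb = e"
      "jc < 4" "tedge V g c jc = e" using ex abc by metis
    have I: "a \<in> I" "b \<in> I" "c \<in> I" using abc by (auto simp: incd_def Tv_def)
    show False using atmost2[OF I(1) j(1) I(2) j(3) _ I(3) j(5) _ abc(4,5,6)] j by simp
  qed
next
  obtain x k where xk: "x \<in> I" "k < 4" "e = tedge V g x k" "v = tvert V g x k \<or> v = tvert V g x (nxt k)"
    using e unfolding edges_at_def by blast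
  obtain y l where yl: "y \<in> I" "y \<noteq> x" "l < 4" "tedge V g y l = tedge V g x k"
    using atleast2[OF xk(1,2)] by blast
  have "v = tvert V g y l \<or> v = tvert V g y (nxt l)"
    using edge_ends[OF xk(1) yl(1) xk(2) yl(3) yl(4)[symmetric]] xk(4) by auto
  then have "y \<in> incd v e" using edge_in_Ed[OF yl(1) yl(3)] yl(4) xk(3) by (simp add: incd_def)
  moreover have "x \<in> incd v e" using edge_in_Ed[OF xk(1) xk(2) xk(4)] xk(3) by (simp add: incd_def)
  ultimately have "{x, y} \<subseteq> incd v e" by simp
  moreover have "finite (incd v e)" using Tv_fin by (simp add: incd_def)
  ultimately have "card {x, y} \<le> card (incd v e)" by (rule card_mono[rotated])
  then show "2 \<le> card (incd v e)" using yl(2) by simp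
qed

end

lemma final_arith0:
  fixes n0 n1 n2 A0 A1 A2 A3 :: nat
  assumes a: "2*n0 = 2*A0 + A1 + A3" "2*n1 = A1 + A2" "2*n2 = A2 + A3" "n0+n1+n2 = 3"
    and b: "A0 \<ge> 1 \<Longrightarrow> n0 \<ge> 2"
  shows "(A0 = 3 \<and> A1 = 0 \<and> A3 = 0 \<and> A2 = 0) \<or> (A0 = 1 \<and> A1 = 2 \<and> A3 = 0 \<and> A2 = 0) \<or>
         (A0 = 1 \<and> A1 = 0 \<and> A3 = 2 \<and> A2 = 0) \<or> (A0 = 0 \<and> A1 = 1 \<and> A3 = 1 \<and> A2 = 1)"
proof -
  have t: "A0 + A1 + A2 + A3 = 3" using a by linarith
  have "A1 \<le> 3" "A2 \<le> 3" "A3 \<le> 3" using t by linarith+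
  then have A: "A1 \<in> {0,1,2,3}" "A2 \<in> {0,1,2,3}" "A3 \<in> {0,1,2,3}" by auto
  from A show ?thesis
    apply (elim insertE emptyE)
    using a b t by presburger+
qed

lemma final_arith:
  fixes n0 n1 n2 A0 A1 A2 A3 :: nat
  assumes a: "2*n0 = 2*A0 + A1 + A3" "2*n1 = A1 + A2" "2*n2 = A2 + A3" "n0+n1+n2 = 3"
    and b: "A0 \<ge> 1 \<Longrightarrow> n0 \<ge> 2"
  shows "(A0, A1, A3, A2) \<in> {(3, 0, 0, 0), (1, 2, 0, 0), (1, 0, 2, 0), (0, 1, 1, 1)}"
  using final_arith0[OF a b] by auto


context til begin

definition "Pc n e = (\<exists>y\<in>I. \<exists>j<4. tedge V g y j = e \<and> cls j = n)"

lemma Pc_iff: "x \<in> I \<Longrightarrow> j < 4 \<Longrightarrow> Pc n (tedge V g x j) \<longleftrightarrow> cls j = n"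
  unfolding Pc_def using cls_eq by metis

lemma E_fin: "finite (edges_at V g I v)"
  unfolding E_eq using Tv_fin by (auto simp: Ed_def)

lemma Ed_sub: "x \<in> Tv v \<Longrightarrow> Ed v x \<subseteq> edges_at V g I v"
  unfolding E_eq by blast

lemma count2:
  "(\<Sum>x\<in>Tv v. card {e \<in> Ed v x. Pc n e}) = 2 * card {e \<in> edges_at V g I v. Pc n e}"
proof -
  define E where "E = edges_at V g I v"
  have "(\<Sum>x\<in>Tv v. card {e \<in> Ed v x. Pc n e}) = (\<Sum>x\<in>Tv v. card {e \<in> E. e \<in> Ed v x \<and> Pc n e})"
  proof (rule sum.cong[OF refl])
    fix x assume "x \<in> Tv v"
    then have "{e \<in> Ed v x. Pc n e} = {e \<in> E. e \<in> Ed v x \<and> Pc n e}" using Ed_sub E_def by blast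
    then show "card {e \<in> Ed v x. Pc n e} = card {e \<in> E. e \<in> Ed v x \<and> Pc n e}" by simp
  qed
  also have "\<dots> = (\<Sum>e\<in>E. card {x \<in> Tv v. e \<in> Ed v x \<and> Pc n e})"
    by (rule dcount[OF Tv_fin]) (simp add: E_def E_fin)
  also have "\<dots> = (\<Sum>e\<in>E. if Pc n e then 2 else 0)"
  proof (rule sum.cong[OF refl])
    fix e assume "e \<in> E"
    then have "card (incd v e) = 2" using incd_card E_def by simp
    then show "card {x \<in> Tv v. e \<in> Ed v x \<and> Pc n e} = (if Pc n e then 2 else 0)"
      by (simp add: incd_def)
  qed
  also have "\<dots> = 2 * card {e \<in> E. Pc n e}"
    using E_fin E_def by (simp add: sum.inter_filter[symmetric])
  finally show ?thesis using E_def by simp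
qed

definition "fcnt n k = (if cls k = n then 1 else 0) + (if cls (prv k) = n then 1 else (0::nat))"

lemma Ed_cnt: assumes "x \<in> Tv v" shows "card {e \<in> Ed v x. Pc n e} = fcnt n (kap v x)"
proof -
  have xI: "x \<in> I" using assms Tv_def by auto
  define k where "k = kap v x"
  have k: "k < 4" using kap[OF assms] k_def by auto
  have ne: "tedge V g x k \<noteq> tedge V g x (prv k)" using Ed_card[OF assms] by (auto simp: Ed_def k_def)
  have "{e \<in> Ed v x. Pc n e} = (if cls k = n then {tedge V g x k} else {}) \<union>
           (if cls (prv k) = n then {tedge V g x (prv k)} else {})"
    using Pc_iff[OF xI k] Pc_iff[OF xI prv_lt4[OF k]] by (auto simp: Ed_def k_def)
  then show ?thesis using ne by (simp add: fcnt_def k_def)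
qed

definition "Acnt v j = card {x \<in> Tv v. kap v x = j}"

lemma sum_kap: "(\<Sum>x\<in>Tv v. f (kap v x)) = (\<Sum>j<4. f j * Acnt v j)"
proof -
  have "(\<Sum>x\<in>Tv v. f (kap v x)) = (\<Sum>j\<in>{..<4}. \<Sum>x\<in>{x \<in> Tv v. kap v x = j}. f (kap v x))"
    by (rule sum.group[symmetric]) (use Tv_fin kap in auto)
  also have "\<dots> = (\<Sum>j<4. f j * Acnt v j)"
    by (rule sum.cong[OF refl]) (simp add: Acnt_def)
  finally show ?thesis .
qed

lemma Acnt_nc: "j < 4 \<Longrightarrow> Acnt v j = ncorner V g I j v"
proof -
  assume j: "j < 4"
  have "{x \<in> Tv v. kap v x = j} = {i \<in> I. tvert V g i j = v}"
  proof (intro set_eqI iffI)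
    fix x assume "x \<in> {x \<in> Tv v. kap v x = j}"
    then have "x \<in> Tv v" "kap v x = j" by auto
    then show "x \<in> {i \<in> I. tvert V g i j = v}" using kap[of x v] by (auto simp: Tv_def)
  next
    fix x assume "x \<in> {i \<in> I. tvert V g i j = v}"
    then have "x \<in> I" "tvert V g x j = v" by auto
    then show "x \<in> {x \<in> Tv v. kap v x = j}" using kap_eq[OF _ j] by blast
  qed
  then show ?thesis by (simp add: Acnt_def ncorner_def)
qed

lemma main_count:
  assumes deg: "card (edges_at V g I v) = 3"
  shows "(ncorner V g I 0 v, ncorner V g I 1 v, ncorner V g I 3 v, ncorner V g I 2 v)
           \<in> {(3, 0, 0, 0), (1, 2, 0, 0), (1, 0, 2, 0), (0, 1, 1, 1)}"
proof -
  define E where "E = edges_at V g I v"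
  define A0 where "A0 = Acnt v 0"
  define A1 where "A1 = Acnt v 1"
  define A2 where "A2 = Acnt v 2"
  define A3 where "A3 = Acnt v 3"
  define n0 where "n0 = card {e \<in> E. Pc 0 e}"
  define n1 where "n1 = card {e \<in> E. Pc 1 e}"
  define n2 where "n2 = card {e \<in> E. Pc 2 e}"
  have sumexp: "(\<Sum>j<4. h j) = h 0 + h 1 + h 2 + h 3" for h :: "nat \<Rightarrow> nat"
    by (simp add: lt4_set)
  have eq: "2 * card {e \<in> E. Pc n e} = (\<Sum>j<4. fcnt n j * Acnt v j)" for n
  proof -
    have "2 * card {e \<in> E. Pc n e} = (\<Sum>x\<in>Tv v. card {e \<in> Ed v x. Pc n e})"
      using count2[of v n] E_def by simp
    also have "\<dots> = (\<Sum>x\<in>Tv v. fcnt n (kap v x))" by (rule sum.cong[OF refl]) (rule Ed_cnt)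
    also have "\<dots> = (\<Sum>j<4. fcnt n j * Acnt v j)" by (rule sum_kap)
    finally show ?thesis .
  qed
  have e0: "2*n0 = 2*A0 + A1 + A3" using eq[of 0] unfolding sumexp
    by (simp add: n0_def A0_def A1_def A2_def A3_def fcnt_def cls_def)
  have e1: "2*n1 = A1 + A2" using eq[of 1] unfolding sumexp
    by (simp add: n1_def A0_def A1_def A2_def A3_def fcnt_def cls_def)
  have e2: "2*n2 = A2 + A3" using eq[of 2] unfolding sumexp
    by (simp add: n2_def A0_def A1_def A2_def A3_def fcnt_def cls_def)
  have Pcl: "Pc 0 e \<or> Pc 1 e \<or> Pc 2 e" if eE: "e \<in> E" for e
  proof -
    obtain i k where ik: "i \<in> I" "k < 4" "e = tedge V g i k" using eE unfolding E_def edges_at_def by blast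
    then have "Pc (cls k) e" using Pc_iff by simp
    moreover have "cls k = 0 \<or> cls k = 1 \<or> cls k = 2" by (simp add: cls_def)
    ultimately show ?thesis by auto
  qed
  have Pun: "n = n'" if P1: "Pc n e" and P2: "Pc n' e" for n n' e
  proof -
    obtain y j where yj: "y \<in> I" "j < 4" "tedge V g y j = e" "cls j = n" using P1 Pc_def by blast
    obtain y' j' where yj': "y' \<in> I" "j' < 4" "tedge V g y' j' = e" "cls j' = n'" using P2 Pc_def by blast
    have "cls j = cls j'" using cls_eq[OF yj(1) yj'(1) yj(2) yj'(2)] yj(3) yj'(3) by simp
    then show ?thesis using yj(4) yj'(4) by simp
  qed
  define X0 where "X0 = {e \<in> E. Pc 0 e}"
  define X1 where "X1 = {e \<in> E. Pc 1 e}"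
  define X2 where "X2 = {e \<in> E. Pc 2 e}"
  have EU: "E = X0 \<union> X1 \<union> X2" using Pcl X0_def X1_def X2_def by blast
  have fE: "finite E" using E_fin E_def by simp
  have f: "finite X0" "finite X1" "finite X2" using fE X0_def X1_def X2_def by auto
  have d1: "X0 \<inter> X1 = {}" using Pun[of 0 _ 1] unfolding X0_def X1_def by auto
  have d2: "(X0 \<union> X1) \<inter> X2 = {}" using Pun[of 0 _ 2] Pun[of 1 _ 2] unfolding X0_def X1_def X2_def by auto
  have "card E = card (X0 \<union> X1) + card X2" unfolding EU using f d2 by (simp add: card_Un_disjoint)
  also have "card (X0 \<union> X1) = card X0 + card X1" using f d1 by (simp add: card_Un_disjoint)
  finally have "card E = n0 + n1 + n2" by (simp add: n0_def n1_def n2_def X0_def X1_def X2_def)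
  then have e3: "n0 + n1 + n2 = 3" using deg E_def by simp
  have e4: "n0 \<ge> 2" if "A0 \<ge> 1"
  proof -
    have "card {x \<in> Tv v. kap v x = 0} \<noteq> 0" using that by (simp add: A0_def Acnt_def)
    then have "{x \<in> Tv v. kap v x = 0} \<noteq> {}" by (metis card.empty)
    then obtain x where x: "x \<in> Tv v" "kap v x = 0" by blast
    have xI: "x \<in> I" using x Tv_def by auto
    have Edx: "Ed v x = {tedge V g x 0, tedge V g x 3}" using x(2) by (simp add: Ed_def)
    have "Pc 0 (tedge V g x 0)" "Pc 0 (tedge V g x 3)" using Pc_iff[OF xI] by (simp_all add: cls_def)
    then have "Ed v x \<subseteq> {e \<in> E. Pc 0 e}"
      using Ed_sub[OF x(1)] E_def Edx by auto
    then have "card (Ed v x) \<le> n0" unfolding n0_def using E_fin E_def by (intro card_mono) auto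
    then show ?thesis using Ed_card[OF x(1)] by simp
  qed
  have "(A0, A1, A3, A2) \<in> {(3, 0, 0, 0), (1, 2, 0, 0), (1, 0, 2, 0), (0, 1, 1, 1)}"
    using final_arith[OF e0 e1 e2 e3 e4] .
  then show ?thesis using Acnt_nc by (simp add: A0_def A1_def A2_def A3_def)
qed

end

theorem lemma9:
  fixes V :: "nat \<Rightarrow> real^3" and C :: "(real^3) set"
    and g :: "'i \<Rightarrow> real^3 \<Rightarrow> real^3" and I :: "'i set"
  assumes "a2bc_tiling V C g I"
    and "v \<in> tiling_vertices V g I"
    and "degree V g I v = 3"
  shows "(ncorner V g I 0 v, ncorner V g I 1 v, ncorner V g I 3 v, ncorner V g I 2 v)
           \<in> {(3, 0, 0, 0), (1, 2, 0, 0), (1, 0, 2, 0), (0, 1, 1, 1)}"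
proof -
  interpret til V C g I using assms(1) by unfold_locales
  show ?thesis using main_count assms(3) by (simp add: degree_def)
qed


end
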